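(* For every $\lambda>0$ the spectral problem has a unique solution $(c(\lambda),Q_\lambda)$. The function $\lambda\mapsto c(\lambda)$ attains its minimum $c^*>0$ on $(0,\infty)$ at some $\lambda^*>0$; let $Q^*=Q_{\lambda^*}$. Moreover: (i) for every $\lambda>0$, $Q_\lambda$ is increasing on $\Theta$, and there is $\theta_0\in\overline\Theta$ with $-\lambda c(\lambda)+\lambda^2\theta_0+r=0$ such that $Q_\lambda$ is convex on $[\theta_{\min},\theta_0]$ and concave on $[\theta_0,\theta_{\max}]$; (ii) with $\langle\theta_\lambda\rangle=\int_\Theta\theta Q_\lambda(\theta)\,d\theta$, for all $\lambda>0$: $-\lambda c(\lambda)+\lambda^2\langle\theta_\lambda\rangle+r=0$ and $\langle\theta_\lambda\rangle>\frac{\theta_{\max}+\theta_{\min}}2$; (iii) with $\langle\theta^*\rangle=\langle\theta_{\lambda^*}\rangle$: $c^*>2\sqrt{r\langle\theta^*\rangle}$ and $c^*\ge\lambda^*(\theta_{\max}+\theta_{\min})$.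
   Context: $\Theta=(\theta_{\min},\theta_{\max})$ with $0<\theta_{\min}<\theta_{\max}<\infty$; $\alpha>0$, $r>0$. Spectral problem for $\lambda>0$: find $c(\lambda)\in\mathbb R$ and $Q_\lambda\in C^2(\overline\Theta)$ with $\alpha Q_\lambda''+(-\lambda c(\lambda)+\theta\lambda^2+r)Q_\lambda=0$ on $\Theta$, $Q_\lambda'(\theta_{\min})=Q_\lambda'(\theta_{\max})=0$, $Q_\lambda>0$, $\int_\Theta Q_\lambda\,d\theta=1$. *)

theory Defs
  imports "HOL-Analysis.Analysis"
begin

definition C2_on_with :: "real \<Rightarrow> real \<Rightarrow> (real \<Rightarrow> real) \<Rightarrow> (real \<Rightarrow> real) \<Rightarrow> (real \<Rightarrow> real) \<Rightarrow> bool" where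
  "C2_on_with a b Q Q1 Q2 \<longleftrightarrow>
     (\<forall>t\<in>{a..b}. (Q has_real_derivative Q1 t) (at t within {a..b})) \<and>
     (\<forall>t\<in>{a..b}. (Q1 has_real_derivative Q2 t) (at t within {a..b})) \<and>
     continuous_on {a..b} Q2"

definition spectral_sol :: "real \<Rightarrow> real \<Rightarrow> real \<Rightarrow> real \<Rightarrow> real \<Rightarrow> real \<Rightarrow> (real \<Rightarrow> real) \<Rightarrow> bool" where
  "spectral_sol tmin tmax \<alpha> r lam c Q \<longleftrightarrow>
     (\<exists>Q1 Q2. C2_on_with tmin tmax Q Q1 Q2 \<and>
        (\<forall>t\<in>{tmin<..<tmax}. \<alpha> * Q2 t + (- lam * c + t * lam\<^sup>2 + r) * Q t = 0) \<and>
        Q1 tmin = 0 \<and> Q1 tmax = 0) \<and>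
     (\<forall>t\<in>{tmin..tmax}. Q t > 0) \<and>
     Q integrable_on {tmin..tmax} \<and>
     integral {tmin..tmax} Q = 1"

end

theory Submission
  imports Defs
begin


fun cf :: "real \<Rightarrow> real \<Rightarrow> real \<Rightarrow> real \<Rightarrow> nat \<Rightarrow> real" where
  "cf a0 a1 p q 0 = a0"
| "cf a0 a1 p q (Suc 0) = a1"
| "cf a0 a1 p q (Suc (Suc 0)) = p * a0 / 2"
| "cf a0 a1 p q (Suc (Suc (Suc n))) =
     (p * cf a0 a1 p q (Suc n) + q * cf a0 a1 p q n) / (real (n+3) * real (n+2))"

lemma fact_aux: "fact ((Suc n) div 2) \<le> (real ((Suc n) div 2) + 1) * fact (n div 2)"
proof -
  define h where "h = Suc n div 2"
  have hn: "h - 1 \<le> n div 2" unfolding h_def by auto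
  have "(fact h :: real) \<le> (real h + 1) * fact (h - 1)"
  proof (cases h)
    case 0 then show ?thesis by simp
  next
    case (Suc k) then show ?thesis by (simp add: algebra_simps)
  qed
  also have "\<dots> \<le> (real h + 1) * fact (n div 2)"
    by (intro mult_left_mono) (use hn fact_mono in auto)
  finally show ?thesis unfolding h_def .
qed

lemma cf_bound:
  assumes K: "K \<ge> 1" "\<bar>p\<bar> + \<bar>q\<bar> \<le> K^2" and a: "\<bar>a0\<bar> \<le> 1" "\<bar>a1\<bar> \<le> 1"
  shows "\<bar>cf a0 a1 p q n\<bar> \<le> K^n / fact (n div 2)"
proof (induction n rule: nat_less_induct)
  case (1 n)
  consider "n = 0" | "n = 1" | "n = 2" | m where "n = Suc (Suc (Suc m))"
    by (metis One_nat_def Suc_1 not0_implies_Suc)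
  then show ?case
  proof cases
    case 1 then show ?thesis using a by simp
  next
    case 2 then show ?thesis using a K by simp
  next
    case 3
    have "\<bar>p\<bar> \<le> K^2" using K by simp
    then have "\<bar>p * a0\<bar> \<le> K^2" using a
      by (metis abs_ge_zero abs_mult mult.right_neutral mult_mono')
    then show ?thesis using 3 by (simp add: numeral_2_eq_2)
  next
    case 4
    define h where "h = Suc m div 2"
    have h3: "Suc (Suc (Suc m)) div 2 = h + 1" unfolding h_def by simp
    have IH1: "\<bar>cf a0 a1 p q (Suc m)\<bar> \<le> K^(Suc m) / fact h"
      using 1[rule_format, of "Suc m"] 4 unfolding h_def by simp
    have IH2: "\<bar>cf a0 a1 p q m\<bar> \<le> K^m / fact (m div 2)"
      using 1[rule_format, of m] 4 by simp
    have fa: "fact h \<le> (real h + 1) * fact (m div 2)"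
      using fact_aux[of m] unfolding h_def .
    have fpos: "(0::real) < fact (m div 2)" "(0::real) < fact h" by auto
    have Kpos: "K > 0" using K by simp
    have "K^m / fact (m div 2) \<le> K^m * (real h + 1) / fact h"
    proof -
      have "fact h * K^m \<le> ((real h + 1) * fact (m div 2)) * K^m"
        using fa Kpos by (intro mult_right_mono) auto
      then show ?thesis using fpos Kpos by (simp add: field_simps)
    qed
    also have "\<dots> \<le> K^(Suc m) * (real h + 1) / fact h"
      using K fpos by (intro divide_right_mono mult_right_mono) (auto intro: power_increasing)
    finally have IH2': "\<bar>cf a0 a1 p q m\<bar> \<le> K^(Suc m) * (real h + 1) / fact h"
      using IH2 by linarith
    have "\<bar>p * cf a0 a1 p q (Suc m) + q * cf a0 a1 p q m\<bar>
        \<le> \<bar>p\<bar> * (K^(Suc m) / fact h) + \<bar>q\<bar> * (K^(Suc m) * (real h + 1) / fact h)"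
    proof -
      have "\<bar>p * cf a0 a1 p q (Suc m)\<bar> \<le> \<bar>p\<bar> * (K^(Suc m) / fact h)"
        unfolding abs_mult using IH1 by (intro mult_left_mono) auto
      moreover have "\<bar>q * cf a0 a1 p q m\<bar> \<le> \<bar>q\<bar> * (K^(Suc m) * (real h + 1) / fact h)"
        unfolding abs_mult using IH2' by (intro mult_left_mono) auto
      ultimately show ?thesis by (meson abs_triangle_ineq add_mono order_trans)
    qed
    also have "\<dots> \<le> (\<bar>p\<bar> + \<bar>q\<bar>) * (K^(Suc m) * (real h + 1) / fact h)"
    proof -
      have "K^(Suc m) / fact h \<le> K^(Suc m) * (real h + 1) / fact h"
        using Kpos fpos by (simp add: field_simps)
      then have "\<bar>p\<bar> * (K^(Suc m) / fact h) \<le> \<bar>p\<bar> * (K^(Suc m) * (real h + 1) / fact h)"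
        by (intro mult_left_mono) auto
      then show ?thesis unfolding distrib_right by linarith
    qed
    also have "\<dots> \<le> K^2 * (K^(Suc m) * (real h + 1) / fact h)"
      using K Kpos fpos by (intro mult_right_mono) auto
    also have "K^2 * (K^(Suc m) * (real h + 1) / fact h) = K^(m+3) * (real h + 1) / fact h"
      by (simp add: numeral_3_eq_3 power2_eq_square)
    finally have num: "\<bar>p * cf a0 a1 p q (Suc m) + q * cf a0 a1 p q m\<bar>
        \<le> K^(m+3) * (real h + 1) / fact h" .
    have hm: "real h + 1 \<le> real m + 2" unfolding h_def by linarith
    have den: "(real h + 1) * (real h + 1) \<le> real (m+3) * real (m+2)"
      using hm by (intro mult_mono) auto
    have "\<bar>cf a0 a1 p q (Suc (Suc (Suc m)))\<bar>
        = \<bar>p * cf a0 a1 p q (Suc m) + q * cf a0 a1 p q m\<bar> / (real (m+3) * real (m+2))"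
      by simp
    also have "\<dots> \<le> K^(m+3) * (real h + 1) / fact h / (real (m+3) * real (m+2))"
      using num by (intro divide_right_mono) auto
    also have "\<dots> \<le> K^(m+3) / fact (h+1)"
    proof -
      have "K^(m+3) * (real h + 1) / fact h / (real (m+3) * real (m+2))
          = K^(m+3) / fact h * ((real h + 1) / (real (m+3) * real (m+2)))" by simp
      also have "\<dots> \<le> K^(m+3) / fact h * (1 / (real h + 1))"
      proof (intro mult_left_mono)
        have D: "real (m+3) * real (m+2) > 0" by simp
        show "(real h + 1) / (real (m+3) * real (m+2)) \<le> 1 / (real h + 1)"
          using den D by (simp add: divide_simps)
      qed (use Kpos fpos in auto)
      also have "\<dots> = K^(m+3) / fact (h+1)" by (simp add: field_simps)
      finally show ?thesis .
    qed
    finally have "\<bar>cf a0 a1 p q (Suc (Suc (Suc m)))\<bar> \<le> K^(m+3) / fact (h+1)" .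
    moreover have "K^(m+3) / fact (h+1) = K^n / fact (n div 2)" using 4 h3 by (simp add: numeral_3_eq_3)
    ultimately show ?thesis using 4 by simp
  qed
qed




lemma sum_div2: "(\<Sum>k<2*(M::nat). g (k div 2)) = 2 * (\<Sum>h<M. (g h :: real))"
  by (induction M) (auto simp: algebra_simps)

lemma summable_div2:
  assumes g: "\<And>n. g n \<ge> (0::real)" "summable g"
  shows "summable (\<lambda>n. g (n div 2))"
proof (rule bounded_imp_summable)
  fix n
  have "(\<Sum>k\<le>n. g (k div 2)) \<le> (\<Sum>k<2*(Suc n). g (k div 2))"
    by (intro sum_mono2) (use g in auto)
  also have "\<dots> = 2 * (\<Sum>h<Suc n. g h)" by (rule sum_div2)
  also have "\<dots> \<le> 2 * suminf g"
    using sum_le_suminf[OF g(2), of "{..<Suc n}"] g by auto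
  finally show "(\<Sum>k\<le>n. g (k div 2)) \<le> 2 * suminf g" .
qed (use g in auto)

lemma summable_pow_fact_div2:
  fixes z :: real
  shows "summable (\<lambda>n. \<bar>z\<bar>^n / fact (n div 2))"
proof -
  define M where "M = max 1 \<bar>z\<bar>"
  have M: "M \<ge> 1" "\<bar>z\<bar> \<le> M" unfolding M_def by auto
  have s1: "summable (\<lambda>h. (M^2)^h / fact h)"
    using summable_exp[of "M^2"] by (simp add: field_simps)
  have s2: "summable (\<lambda>n. M * ((M^2)^(n div 2) / fact (n div 2)))"
    by (intro summable_mult summable_div2 s1) auto
  show ?thesis
  proof (rule summable_comparison_test[OF _ s2], intro exI allI impI)
    fix n :: nat
    have "\<bar>z\<bar>^n \<le> M^n" using M by (intro power_mono) auto
    also have "\<dots> \<le> M^(2*(n div 2) + 1)"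
      using M by (intro power_increasing) auto
    also have "\<dots> = M * (M^2)^(n div 2)" by (simp add: power_mult)
    finally have "\<bar>z\<bar>^n \<le> M * (M^2)^(n div 2)" .
    then show "norm (\<bar>z\<bar>^n / fact (n div 2)) \<le> M * ((M^2)^(n div 2) / fact (n div 2))"
      by (simp add: divide_right_mono)
  qed
qed

definition S :: "real \<Rightarrow> real \<Rightarrow> real \<Rightarrow> real \<Rightarrow> real \<Rightarrow> real" where
  "S a0 a1 p q x = (\<Sum>n. cf a0 a1 p q n * x^n)"
definition S1 :: "real \<Rightarrow> real \<Rightarrow> real \<Rightarrow> real \<Rightarrow> real \<Rightarrow> real" where
  "S1 a0 a1 p q x = (\<Sum>n. diffs (cf a0 a1 p q) n * x^n)"
definition S2 :: "real \<Rightarrow> real \<Rightarrow> real \<Rightarrow> real \<Rightarrow> real \<Rightarrow> real" where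
  "S2 a0 a1 p q x = (\<Sum>n. diffs (diffs (cf a0 a1 p q)) n * x^n)"

lemma cf_summable:
  assumes a: "\<bar>a0\<bar> \<le> 1" "\<bar>a1\<bar> \<le> 1"
  shows "summable (\<lambda>n. cf a0 a1 p q n * y^n)"
proof -
  define K where "K = 1 + \<bar>p\<bar> + \<bar>q\<bar>"
  have K: "K \<ge> 1" "\<bar>p\<bar> + \<bar>q\<bar> \<le> K^2"
    unfolding K_def power2_eq_square by (auto intro: order_trans[OF _ mult_right_mono[of 1]])
  show ?thesis
  proof (rule summable_comparison_test[OF _ summable_pow_fact_div2[of "K*y"]], intro exI allI impI)
    fix n
    have "norm (cf a0 a1 p q n * y^n) = \<bar>cf a0 a1 p q n\<bar> * \<bar>y\<bar>^n"
      by (simp add: abs_mult power_abs)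
    also have "\<dots> \<le> K^n / fact (n div 2) * \<bar>y\<bar>^n"
      by (intro mult_right_mono cf_bound[OF K a]) auto
    also have "\<dots> = \<bar>K*y\<bar>^n / fact (n div 2)"
      using K by (simp add: abs_mult power_mult_distrib)
    finally show "norm (cf a0 a1 p q n * y^n) \<le> \<bar>K*y\<bar>^n / fact (n div 2)" .
  qed
qed

lemma cf_summable1:
  assumes a: "\<bar>a0\<bar> \<le> 1" "\<bar>a1\<bar> \<le> 1"
  shows "summable (\<lambda>n. diffs (cf a0 a1 p q) n * y^n)"
  by (rule termdiff_converges_all) (rule cf_summable[OF a])

lemma cf_summable2:
  assumes a: "\<bar>a0\<bar> \<le> 1" "\<bar>a1\<bar> \<le> 1"
  shows "summable (\<lambda>n. diffs (diffs (cf a0 a1 p q)) n * y^n)"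
  by (rule termdiff_converges_all) (rule cf_summable1[OF a])

lemma S_deriv:
  assumes a: "\<bar>a0\<bar> \<le> 1" "\<bar>a1\<bar> \<le> 1"
  shows "(S a0 a1 p q has_real_derivative S1 a0 a1 p q x) (at x)"
  unfolding S_def[abs_def] S1_def
  by (rule termdiffs_strong_converges_everywhere) (rule cf_summable[OF a])

lemma S1_deriv:
  assumes a: "\<bar>a0\<bar> \<le> 1" "\<bar>a1\<bar> \<le> 1"
  shows "(S1 a0 a1 p q has_real_derivative S2 a0 a1 p q x) (at x)"
  unfolding S1_def[abs_def] S2_def
  by (rule termdiffs_strong_converges_everywhere) (rule cf_summable1[OF a])

lemma S_0: "S a0 a1 p q 0 = a0"
  unfolding S_def using powser_zero[of "cf a0 a1 p q"] by simp

lemma S1_0: "S1 a0 a1 p q 0 = a1"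
  unfolding S1_def using powser_zero[of "diffs (cf a0 a1 p q)"] by (simp add: diffs_def)

lemma S2_ode:
  assumes a: "\<bar>a0\<bar> \<le> 1" "\<bar>a1\<bar> \<le> 1"
  shows "S2 a0 a1 p q x = (p + q * x) * S a0 a1 p q x"
proof -
  let ?c = "cf a0 a1 p q"
  define g where "g n = (case n of 0 \<Rightarrow> 0 | Suc m \<Rightarrow> q * ?c m * x^(Suc m))" for n
  have eq: "diffs (diffs ?c) n * x^n = p * (?c n * x^n) + g n" for n
  proof (cases n)
    case 0 then show ?thesis by (simp add: diffs_def g_def)
  next
    case (Suc m)
    have "real (Suc (Suc m)) * (real (Suc (Suc (Suc m))) * ?c (Suc (Suc (Suc m))))
        = p * ?c (Suc m) + q * ?c m"
    proof -
      define D where "D = real (m+3) * real (m+2)"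
      have D: "D > 0" unfolding D_def by simp
      have c3: "?c (Suc (Suc (Suc m))) = (p * ?c (Suc m) + q * ?c m) / D"
        unfolding D_def by simp
      have "real (Suc (Suc m)) * real (Suc (Suc (Suc m))) = D" unfolding D_def by simp
      then have "real (Suc (Suc m)) * (real (Suc (Suc (Suc m))) * ?c (Suc (Suc (Suc m))))
          = D * ((p * ?c (Suc m) + q * ?c m) / D)" unfolding c3 by (simp only: mult.assoc[symmetric])
      also have "\<dots> = p * ?c (Suc m) + q * ?c m" using D by simp
      finally show ?thesis .
    qed
    then show ?thesis unfolding Suc diffs_def g_def
      by (simp add: algebra_simps)
  qed
  have s1: "(\<lambda>n. p * (?c n * x^n)) sums (p * S a0 a1 p q x)"
    unfolding S_def by (intro sums_mult summable_sums cf_summable[OF a])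
  have "(\<lambda>n. q * x * (?c n * x^n)) sums (q * x * S a0 a1 p q x)"
    unfolding S_def by (intro sums_mult summable_sums cf_summable[OF a])
  then have "(\<lambda>n. g (Suc n)) sums (q * x * S a0 a1 p q x)"
    by (simp add: g_def algebra_simps)
  then have "g sums (q * x * S a0 a1 p q x + g 0)"
    by (simp only: sums_Suc_iff)
  then have s2: "g sums (q * x * S a0 a1 p q x)"
    by (simp add: g_def)
  have "(\<lambda>n. diffs (diffs ?c) n * x^n) sums (p * S a0 a1 p q x + q * x * S a0 a1 p q x)"
    unfolding eq by (rule sums_add[OF s1 s2])
  then show ?thesis unfolding S2_def
    by (simp add: sums_iff algebra_simps)
qed




lemma powser_param_cont:
  fixes c :: "nat \<Rightarrow> 'a::topological_space \<Rightarrow> real"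
  assumes cont: "\<And>n. continuous_on P (c n)"
    and bnd: "\<And>n z. z \<in> P \<Longrightarrow> \<bar>c n z\<bar> \<le> B n" and B0: "\<And>n. B n \<ge> 0"
    and summ: "summable (\<lambda>n. B n * R^n)"
  shows "continuous_on (P \<times> {-R..R}) (\<lambda>w. \<Sum>n. c n (fst w) * snd w ^ n)"
proof -
  have ul: "uniform_limit (P \<times> {-R..R}) (\<lambda>N w. \<Sum>n<N. c n (fst w) * snd w^n)
      (\<lambda>w. \<Sum>n. c n (fst w) * snd w ^ n) sequentially"
  proof (rule Weierstrass_m_test[where M = "\<lambda>n. B n * R^n"])
    fix n and w :: "'a \<times> real"
    assume w: "w \<in> P \<times> {-R..R}"
    then have "\<bar>snd w\<bar> \<le> R" by auto
    then have "\<bar>snd w\<bar>^n \<le> R^n" by (intro power_mono) auto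
    moreover have "\<bar>c n (fst w)\<bar> \<le> B n" using w bnd by auto
    ultimately show "norm (c n (fst w) * snd w ^ n) \<le> B n * R^n"
      by (simp add: abs_mult power_abs mult_mono B0)
  qed (rule summ)
  show ?thesis
  proof (rule uniform_limit_theorem[OF _ ul])
    show "\<forall>\<^sub>F N in sequentially. continuous_on (P \<times> {-R..R}) (\<lambda>w. \<Sum>n<N. c n (fst w) * snd w^n)"
    proof (intro always_eventually allI continuous_on_sum continuous_on_mult continuous_on_power
        continuous_on_snd continuous_on_id)
      fix N n
      show "continuous_on (P \<times> {-R..R}) (\<lambda>w. c n (fst w))"
        by (rule continuous_on_compose2[OF cont continuous_on_fst]) (auto intro: continuous_on_id)
    qed
  qed simp
qed

lemma cf_cont: "continuous_on UNIV (\<lambda>z::real\<times>real. cf a0 a1 (fst z) (snd z) n)"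
proof (induction n rule: nat_less_induct)
  case (1 n)
  consider "n = 0" | "n = 1" | "n = 2" | m where "n = Suc (Suc (Suc m))"
    by (metis One_nat_def Suc_1 not0_implies_Suc)
  then show ?case
  proof cases
    case 4
    have c1: "continuous_on UNIV (\<lambda>z::real\<times>real. cf a0 a1 (fst z) (snd z) (Suc m))"
      using 1 4 by auto
    have c2: "continuous_on UNIV (\<lambda>z::real\<times>real. cf a0 a1 (fst z) (snd z) m)"
      using 1 4 by auto
    show ?thesis unfolding 4 cf.simps
      by (intro continuous_intros c1 c2) auto
  qed (auto simp: numeral_2_eq_2 intro!: continuous_intros)
qed

definition Bf :: "real \<Rightarrow> nat \<Rightarrow> real" where "Bf K n = K^n / fact (n div 2)"

lemma Bf_summable: "summable (\<lambda>n. Bf K n * y^n)"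
proof (rule summable_comparison_test[OF _ summable_pow_fact_div2[of "K*y"]], intro exI allI impI)
  fix n show "norm (Bf K n * y^n) \<le> \<bar>K*y\<bar>^n / fact (n div 2)"
    by (simp add: Bf_def abs_mult power_abs power_mult_distrib)
qed

lemma Bf_diffs_summable: "summable (\<lambda>n. diffs (Bf K) n * y^n)"
  by (rule termdiff_converges_all) (rule Bf_summable)

lemma S_param_bound:
  fixes z0 :: "real \<times> real"
  assumes "z \<in> ball z0 1"
  defines "K \<equiv> 3 + \<bar>fst z0\<bar> + \<bar>snd z0\<bar>"
  shows "K \<ge> 1" "\<bar>fst z\<bar> + \<bar>snd z\<bar> \<le> K^2"
proof -
  show K1: "K \<ge> 1" unfolding K_def by simp
  have "dist (fst z) (fst z0) < 1" "dist (snd z) (snd z0) < 1"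
    using assms dist_fst_le dist_snd_le by (metis dist_commute mem_ball order.strict_trans1)+
  then have "\<bar>fst z\<bar> + \<bar>snd z\<bar> \<le> K" unfolding K_def dist_real_def by linarith
  also have "K \<le> K^2" using K1 by (simp add: power2_eq_square)
  finally show "\<bar>fst z\<bar> + \<bar>snd z\<bar> \<le> K^2" .
qed

lemma isCont_from_local:
  fixes f :: "(real \<times> real) \<times> real \<Rightarrow> real"
  assumes "\<And>z0 R. R \<ge> 0 \<Longrightarrow> continuous_on (ball z0 1 \<times> {-R..R}) f"
  shows "continuous_on UNIV f"
proof (rule continuous_at_imp_continuous_on, intro ballI)
  fix w :: "(real \<times> real) \<times> real"
  define R where "R = \<bar>snd w\<bar> + 1"
  have "continuous_on (ball (fst w) 1 \<times> {-R<..<R}) f"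
    by (rule continuous_on_subset[OF assms[of R "fst w"]]) (auto simp: R_def)
  moreover have "open (ball (fst w) 1 \<times> {-R<..<R})" by (intro open_Times) auto
  moreover have "w \<in> ball (fst w) 1 \<times> {-R<..<R}" by (cases w) (auto simp: R_def)
  ultimately show "isCont f w" using continuous_on_eq_continuous_at by blast
qed

lemma S_cont:
  assumes a: "\<bar>a0\<bar> \<le> 1" "\<bar>a1\<bar> \<le> 1"
  shows "continuous_on UNIV (\<lambda>w::(real\<times>real)\<times>real. S a0 a1 (fst (fst w)) (snd (fst w)) (snd w))"
proof (rule isCont_from_local)
  fix z0 :: "real \<times> real" and R :: real
  define K where "K = 3 + \<bar>fst z0\<bar> + \<bar>snd z0\<bar>"
  show "continuous_on (ball z0 1 \<times> {-R..R}) (\<lambda>w. S a0 a1 (fst (fst w)) (snd (fst w)) (snd w))"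
    unfolding S_def
  proof (rule powser_param_cont[where B = "Bf K" and c = "\<lambda>n z. cf a0 a1 (fst z) (snd z) n"])
    show "continuous_on (ball z0 1) (\<lambda>z. cf a0 a1 (fst z) (snd z) n)" for n
      using cf_cont continuous_on_subset by blast
    show "\<bar>cf a0 a1 (fst z) (snd z) n\<bar> \<le> Bf K n" if "z \<in> ball z0 1" for z n
      unfolding Bf_def K_def using cf_bound[OF S_param_bound[OF that] a] by simp
    show "Bf K n \<ge> 0" for n unfolding Bf_def K_def by simp
  qed (rule Bf_summable)
qed

lemma S1_cont:
  assumes a: "\<bar>a0\<bar> \<le> 1" "\<bar>a1\<bar> \<le> 1"
  shows "continuous_on UNIV (\<lambda>w::(real\<times>real)\<times>real. S1 a0 a1 (fst (fst w)) (snd (fst w)) (snd w))"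
proof (rule isCont_from_local)
  fix z0 :: "real \<times> real" and R :: real
  define K where "K = 3 + \<bar>fst z0\<bar> + \<bar>snd z0\<bar>"
  show "continuous_on (ball z0 1 \<times> {-R..R}) (\<lambda>w. S1 a0 a1 (fst (fst w)) (snd (fst w)) (snd w))"
    unfolding S1_def
  proof (rule powser_param_cont[where B = "diffs (Bf K)" and c = "\<lambda>n z. diffs (cf a0 a1 (fst z) (snd z)) n"])
    show "continuous_on (ball z0 1) (\<lambda>z. diffs (cf a0 a1 (fst z) (snd z)) n)" for n
      unfolding diffs_def using cf_cont continuous_on_subset
      by (intro continuous_intros) blast
    show "\<bar>diffs (cf a0 a1 (fst z) (snd z)) n\<bar> \<le> diffs (Bf K) n" if "z \<in> ball z0 1" for z n
      unfolding Bf_def K_def diffs_def abs_mult abs_of_nat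
      by (intro mult_left_mono, rule cf_bound[OF S_param_bound[OF that] a]) auto
    show "diffs (Bf K) n \<ge> 0" for n unfolding Bf_def K_def diffs_def by simp
  qed (rule Bf_diffs_summable)
qed




lemma cf_nonneg: "p \<ge> 0 \<Longrightarrow> q \<ge> 0 \<Longrightarrow> cf 1 0 p q n \<ge> 0"
proof (induction n rule: nat_less_induct)
  case (1 n)
  consider "n = 0" | "n = 1" | "n = 2" | m where "n = Suc (Suc (Suc m))"
    by (metis One_nat_def Suc_1 not0_implies_Suc)
  then show ?case
  proof cases
    case 4
    have "cf 1 0 p q (Suc m) \<ge> 0" "cf 1 0 p q m \<ge> 0" using 1 4 by auto
    then show ?thesis unfolding 4 cf.simps using 1 by (intro divide_nonneg_pos) auto
  qed (use 1 in \<open>auto simp: numeral_2_eq_2\<close>)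
qed

lemma cont_ge_right:
  fixes f :: "real \<Rightarrow> real"
  assumes "continuous_on {x0..x1} f" "x0 < x1" "\<And>x. x0 < x \<Longrightarrow> x \<le> x1 \<Longrightarrow> f x \<ge> c"
  shows "f x0 \<ge> c"
  using continuous_ge_on_closure[of "{x0<..x1}" f x0 c] assms by auto

lemma cont_ge_left:
  fixes f :: "real \<Rightarrow> real"
  assumes "continuous_on {x0..x1} f" "x0 < x1" "\<And>x. x0 \<le> x \<Longrightarrow> x < x1 \<Longrightarrow> f x \<ge> c"
  shows "f x1 \<ge> c"
  using continuous_ge_on_closure[of "{x0..<x1}" f x1 c] assms by auto

locale spec =
  fixes a b \<alpha> r :: real
  assumes a_pos: "0 < a" and ab: "a < b" and al: "0 < \<alpha>" and r_pos: "0 < r"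
begin

definition "L = b - a"
lemma L_pos: "L > 0" using ab unfolding L_def by simp

definition "Y s \<mu> u = S 1 0 ((\<mu> - s*b)/\<alpha>) (s/\<alpha>) u"
definition "Y1 s \<mu> u = S1 1 0 ((\<mu> - s*b)/\<alpha>) (s/\<alpha>) u"
definition "Y2 s \<mu> u = S2 1 0 ((\<mu> - s*b)/\<alpha>) (s/\<alpha>) u"
definition "Z s \<mu> u = S 0 1 ((\<mu> - s*b)/\<alpha>) (s/\<alpha>) u"
definition "Z1 s \<mu> u = S1 0 1 ((\<mu> - s*b)/\<alpha>) (s/\<alpha>) u"
definition "Z2 s \<mu> u = S2 0 1 ((\<mu> - s*b)/\<alpha>) (s/\<alpha>) u"

lemma Y_deriv: "(Y s \<mu> has_real_derivative Y1 s \<mu> u) (at u)"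
  unfolding Y_def[abs_def] Y1_def by (rule S_deriv) auto
lemma Y1_deriv: "(Y1 s \<mu> has_real_derivative Y2 s \<mu> u) (at u)"
  unfolding Y1_def[abs_def] Y2_def by (rule S1_deriv) auto
lemma Z_deriv: "(Z s \<mu> has_real_derivative Z1 s \<mu> u) (at u)"
  unfolding Z_def[abs_def] Z1_def by (rule S_deriv) auto
lemma Z1_deriv: "(Z1 s \<mu> has_real_derivative Z2 s \<mu> u) (at u)"
  unfolding Z1_def[abs_def] Z2_def by (rule S1_deriv) auto

lemma al_ne: "\<alpha> \<noteq> 0" using al by simp

lemma coef_eq: "(\<mu> - s*b)/\<alpha> + s/\<alpha> * u = (\<mu> - s*(b-u))/\<alpha>"
  using al_ne by (simp add: field_simps)

lemma Y2_eq: "Y2 s \<mu> u = (\<mu> - s*(b-u))/\<alpha> * Y s \<mu> u"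
proof -
  have "Y2 s \<mu> u = ((\<mu> - s*b)/\<alpha> + s/\<alpha> * u) * Y s \<mu> u"
    unfolding Y2_def Y_def by (rule S2_ode) auto
  then show ?thesis by (simp only: coef_eq)
qed
lemma Z2_eq: "Z2 s \<mu> u = (\<mu> - s*(b-u))/\<alpha> * Z s \<mu> u"
proof -
  have "Z2 s \<mu> u = ((\<mu> - s*b)/\<alpha> + s/\<alpha> * u) * Z s \<mu> u"
    unfolding Z2_def Z_def by (rule S2_ode) auto
  then show ?thesis by (simp only: coef_eq)
qed

lemma Y_0: "Y s \<mu> 0 = 1" unfolding Y_def by (simp add: S_0)
lemma Y1_0: "Y1 s \<mu> 0 = 0" unfolding Y1_def by (simp add: S1_0)
lemma Z_0: "Z s \<mu> 0 = 0" unfolding Z_def by (simp add: S_0)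
lemma Z1_0: "Z1 s \<mu> 0 = 1" unfolding Z1_def by (simp add: S1_0)

lemma wronski: "Y s \<mu> u * Z1 s \<mu> u - Z s \<mu> u * Y1 s \<mu> u = 1"
proof -
  have "\<forall>x. ((\<lambda>u. Y s \<mu> u * Z1 s \<mu> u - Z s \<mu> u * Y1 s \<mu> u) has_real_derivative 0) (at x)"
  proof
    fix x
    have "((\<lambda>u. Y s \<mu> u * Z1 s \<mu> u - Z s \<mu> u * Y1 s \<mu> u) has_real_derivative
      (Y1 s \<mu> x * Z1 s \<mu> x + Z2 s \<mu> x * Y s \<mu> x) - (Z1 s \<mu> x * Y1 s \<mu> x + Y2 s \<mu> x * Z s \<mu> x)) (at x)"
      by (intro DERIV_diff DERIV_mult Y_deriv Y1_deriv Z_deriv Z1_deriv)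
    then show "((\<lambda>u. Y s \<mu> u * Z1 s \<mu> u - Z s \<mu> u * Y1 s \<mu> u) has_real_derivative 0) (at x)"
      by (simp add: Y2_eq Z2_eq algebra_simps)
  qed
  from DERIV_isconst_all[OF this, of u 0] show ?thesis by (simp add: Y_0 Y1_0 Z_0 Z1_0)
qed

lemma not_both_zero: "Y s \<mu> u = 0 \<Longrightarrow> Y1 s \<mu> u = 0 \<Longrightarrow> False"
  using wronski[of s \<mu> u] by simp

lemma Y_cont_comp:
  assumes "continuous_on U fs" "continuous_on U fm" "continuous_on U fu"
  shows "continuous_on U (\<lambda>x. Y (fs x) (fm x) (fu x))"
proof -
  have g: "continuous_on U (\<lambda>x. ((((fm x) - fs x*b)/\<alpha>, fs x/\<alpha>), fu x))"
    by (intro continuous_intros assms) (use al in auto)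
  have "continuous_on U (\<lambda>x. (\<lambda>w. S 1 0 (fst (fst w)) (snd (fst w)) (snd w)) ((((fm x) - fs x*b)/\<alpha>, fs x/\<alpha>), fu x))"
    by (rule continuous_on_compose2[OF S_cont g]) auto
  then show ?thesis unfolding Y_def by simp
qed

lemma Y1_cont_comp:
  assumes "continuous_on U fs" "continuous_on U fm" "continuous_on U fu"
  shows "continuous_on U (\<lambda>x. Y1 (fs x) (fm x) (fu x))"
proof -
  have g: "continuous_on U (\<lambda>x. ((((fm x) - fs x*b)/\<alpha>, fs x/\<alpha>), fu x))"
    by (intro continuous_intros assms) (use al in auto)
  have "continuous_on U (\<lambda>x. (\<lambda>w. S1 1 0 (fst (fst w)) (snd (fst w)) (snd w)) ((((fm x) - fs x*b)/\<alpha>, fs x/\<alpha>), fu x))"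
    by (rule continuous_on_compose2[OF S1_cont g]) auto
  then show ?thesis unfolding Y1_def by simp
qed

lemma Y_cont: "continuous_on U (Y s \<mu>)"
  using Y_cont_comp[of U "\<lambda>_. s" "\<lambda>_. \<mu>" "\<lambda>x. x"] by (simp add: continuous_on_const continuous_on_id)
lemma Y1_cont: "continuous_on U (Y1 s \<mu>)"
  using Y1_cont_comp[of U "\<lambda>_. s" "\<lambda>_. \<mu>" "\<lambda>x. x"] by (simp add: continuous_on_const continuous_on_id)
lemma Y_cont_mu: "continuous_on U (\<lambda>\<mu>. Y s \<mu> u)"
  using Y_cont_comp[of U "\<lambda>_. s" "\<lambda>x. x" "\<lambda>_. u"] by (simp add: continuous_on_const continuous_on_id)
lemma Y1_cont_mu: "continuous_on U (\<lambda>\<mu>. Y1 s \<mu> u)"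
  using Y1_cont_comp[of U "\<lambda>_. s" "\<lambda>x. x" "\<lambda>_. u"] by (simp add: continuous_on_const continuous_on_id)

definition "T s = {\<mu>. (\<forall>u\<in>{0..L}. Y s \<mu> u > 0) \<and> Y1 s \<mu> L \<ge> 0}"

lemma T_nonempty:
  assumes "s > 0" shows "s * b \<in> T s"
proof -
  let ?c = "cf 1 0 0 (s/\<alpha>)"
  have c0: "?c n \<ge> 0" for n using assms al by (intro cf_nonneg) auto
  have sm: "summable (\<lambda>n. ?c n * u^n)" for u by (rule cf_summable) auto
  have "Y s (s*b) u \<ge> 1" if "u \<ge> 0" for u
  proof -
    have "(\<Sum>n\<in>{..<1}. ?c n * u^n) \<le> (\<Sum>n. ?c n * u^n)"
      by (rule sum_le_suminf[OF sm]) (use c0 that in auto)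
    then show ?thesis unfolding Y_def S_def by simp
  qed
  moreover have "Y1 s (s*b) L \<ge> 0"
    unfolding Y1_def S1_def using c0 L_pos
    by (intro suminf_nonneg cf_summable1) (auto simp: diffs_def)
  ultimately show ?thesis unfolding T_def by force
qed

lemma T_lower:
  assumes "s > 0" "\<mu> \<in> T s" shows "\<mu> > s * a"
proof (rule ccontr)
  assume "\<not> \<mu> > s * a"
  then have mu: "\<mu> \<le> s * a" by simp
  have pos: "\<forall>u\<in>{0..L}. Y s \<mu> u > 0" "Y1 s \<mu> L \<ge> 0" using assms unfolding T_def by auto
  have "Y1 s \<mu> 0 > Y1 s \<mu> L"
  proof (rule DERIV_neg_imp_decreasing_open[OF L_pos])
    fix x assume x: "0 < x" "x < L"
    have "\<mu> - s*(b-x) < 0"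
    proof -
      have "b - x > a" using x unfolding L_def by simp
      then have "s*(b-x) > s*a" using assms by simp
      then show ?thesis using mu by simp
    qed
    then have "(\<mu> - s*(b-x))/\<alpha> * Y s \<mu> x < 0" using pos x al
      by (intro mult_neg_pos divide_neg_pos) auto
    then show "\<exists>y. DERIV (Y1 s \<mu>) x :> y \<and> y < 0"
      using Y1_deriv[of s \<mu> x] unfolding Y2_eq by blast
  qed (rule Y1_cont)
  then show False using pos by (simp add: Y1_0)
qed

lemma T_up:
  assumes s: "s > 0" and m1: "\<mu>1 \<in> T s" and m12: "\<mu>1 < \<mu>2"
  shows "\<mu>2 \<in> T s"
proof -
  let ?A = "Y s \<mu>1" and ?A' = "Y1 s \<mu>1" and ?B = "Y s \<mu>2" and ?B' = "Y1 s \<mu>2"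
  have Apos: "\<forall>u\<in>{0..L}. ?A u > 0" and A'L: "?A' L \<ge> 0" using m1 unfolding T_def by auto
  define W where "W u = ?A u * ?B' u - ?B u * ?A' u" for u
  have Wd: "(W has_real_derivative (\<mu>2 - \<mu>1)/\<alpha> * ?A x * ?B x) (at x)" for x
  proof -
    have "(W has_real_derivative (?A' x * ?B' x + Y2 s \<mu>2 x * ?A x) - (?B' x * ?A' x + Y2 s \<mu>1 x * ?B x)) (at x)"
      unfolding W_def[abs_def] by (intro DERIV_diff DERIV_mult Y_deriv Y1_deriv)
    moreover have "(?A' x * ?B' x + Y2 s \<mu>2 x * ?A x) - (?B' x * ?A' x + Y2 s \<mu>1 x * ?B x)
        = (\<mu>2 - \<mu>1)/\<alpha> * ?A x * ?B x"
      unfolding Y2_eq using al_ne by (simp add: field_simps)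
    ultimately show ?thesis by simp
  qed
  have W0: "W 0 = 0" unfolding W_def by (simp add: Y1_0)
  have Wcont: "continuous_on U W" for U
    unfolding W_def by (intro continuous_intros Y_cont Y1_cont)
  have key: "W v \<ge> 0 \<and> ?B v \<ge> ?A v"
    if v: "0 \<le> v" "v \<le> L" and Bp: "\<forall>w\<in>{0..v}. ?B w > 0" for v
  proof -
    have Wnn: "W w \<ge> 0" if w: "0 \<le> w" "w \<le> v" for w
    proof (cases "w = 0")
      case True then show ?thesis using W0 by simp
    next
      case False
      then have "W 0 \<le> W w"
      proof (intro DERIV_nonneg_imp_increasing_open[OF w(1)])
        fix x assume x: "0 < x" "x < w"
        have "?A x > 0" "?B x > 0" using Apos Bp x w v by auto
        then have "(\<mu>2 - \<mu>1)/\<alpha> * ?A x * ?B x \<ge> 0"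
          using m12 al by (intro mult_nonneg_nonneg) auto
        then show "\<exists>y. DERIV W x :> y \<and> y \<ge> 0" using Wd by blast
      qed (rule Wcont)
      then show ?thesis using W0 by simp
    qed
    have "?B 0 / ?A 0 \<le> ?B v / ?A v"
    proof (cases "v = 0")
      case True then show ?thesis by simp
    next
      case False
      show ?thesis
      proof (intro DERIV_nonneg_imp_increasing_open[OF v(1)])
        fix x assume x: "0 < x" "x < v"
        have Ax: "?A x > 0" using Apos x v by auto
        have "((\<lambda>u. ?B u / ?A u) has_real_derivative (?B' x * ?A x - ?B x * ?A' x) / (?A x * ?A x)) (at x)"
          by (rule DERIV_divide[OF Y_deriv Y_deriv]) (use Ax in auto)
        moreover have "(?B' x * ?A x - ?B x * ?A' x) / (?A x * ?A x) \<ge> 0"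
          using Wnn[of x] x Ax unfolding W_def by (simp add: algebra_simps)
        ultimately show "\<exists>y. ((\<lambda>u. ?B u / ?A u) has_real_derivative y) (at x) \<and> y \<ge> 0" by blast
      next
        show "continuous_on {0..v} (\<lambda>u. ?B u / ?A u)"
        proof (intro continuous_intros Y_cont ballI)
          fix u assume "u \<in> {0..v}"
          then have "?A u > 0" using Apos v by auto
          then show "?A u \<noteq> 0" by simp
        qed
      qed
    qed
    then have "1 \<le> ?B v / ?A v" by (simp add: Y_0)
    then have "?A v \<le> ?B v" using Apos v by (simp add: divide_simps split: if_splits)
    then show ?thesis using Wnn[of v] v by simp
  qed
  have Bpos: "\<forall>u\<in>{0..L}. ?B u > 0"
  proof (rule ccontr)
    assume neg: "\<not> ?thesis"
    define E where "E = {u\<in>{0..L}. ?B u \<le> 0}"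
    have Ene: "E \<noteq> {}" using neg unfolding E_def by force
    have Ecl: "closed E"
    proof -
      have "closed {u. ?B u \<le> 0}"
        by (rule closed_Collect_le) (auto intro: Y_cont continuous_on_const)
      then have "closed ({0..L} \<inter> {u. ?B u \<le> 0})" by (intro closed_Int) auto
      moreover have "{0..L} \<inter> {u. ?B u \<le> 0} = E" unfolding E_def by auto
      ultimately show ?thesis by simp
    qed
    have Ebd: "bdd_below E" unfolding E_def by (rule bdd_belowI[of _ 0]) auto
    define u1 where "u1 = Inf E"
    have u1E: "u1 \<in> E" unfolding u1_def by (rule closed_contains_Inf[OF Ene Ebd Ecl])
    then have u1: "0 \<le> u1" "u1 \<le> L" "?B u1 \<le> 0" unfolding E_def by auto
    have below: "?B w > 0" if "0 \<le> w" "w < u1" for w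
    proof (rule ccontr)
      assume "\<not> ?B w > 0"
      then have "w \<in> E" using that u1 unfolding E_def by auto
      then have "u1 \<le> w" unfolding u1_def by (rule cInf_lower[OF _ Ebd])
      then show False using that by simp
    qed
    show False
    proof (cases "u1 = 0")
      case True then show False using u1 by (simp add: Y_0)
    next
      case False
      then have u1p: "u1 > 0" using u1 by simp
      have "?B u1 - ?A u1 \<ge> 0"
      proof (rule cont_ge_left[OF _ u1p])
        show "continuous_on {0..u1} (\<lambda>u. ?B u - ?A u)" by (intro continuous_intros Y_cont)
        fix x assume x: "0 \<le> x" "x < u1"
        have "?B x \<ge> ?A x" using key[of x] below x u1 by auto
        then show "?B x - ?A x \<ge> 0" by simp
      qed
      then show False using Apos u1 by force
    qed
  qed
  have "W L \<ge> 0" using key[of L] Bpos L_pos by auto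
  then have "?A L * ?B' L \<ge> ?B L * ?A' L" unfolding W_def by simp
  moreover have "?B L * ?A' L \<ge> 0"
  proof -
    have "?B L > 0" using Bpos L_pos by auto
    then show ?thesis using A'L by simp
  qed
  ultimately have "?A L * ?B' L \<ge> 0" by linarith
  moreover have "?A L > 0" using Apos L_pos by auto
  ultimately have "?B' L \<ge> 0" by (simp add: zero_le_mult_iff)
  then show ?thesis using Bpos unfolding T_def by auto
qed

end



context spec begin

definition "mu s = Inf (T s)"

lemma T_bdd: "s > 0 \<Longrightarrow> bdd_below (T s)"
  by (rule bdd_belowI[of _ "s*a"]) (auto dest: T_lower)

lemma above_mu: assumes "s > 0" "\<mu> > mu s" shows "\<mu> \<in> T s"
proof -
  have "T s \<noteq> {}" using T_nonempty[OF assms(1)] by auto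
  then obtain \<mu>' where "\<mu>' \<in> T s" "\<mu>' < \<mu>"
    using assms cInf_less_iff[OF _ T_bdd[OF assms(1)]] unfolding mu_def by blast
  then show ?thesis using T_up[OF assms(1)] by blast
qed

lemma mu_props:
  assumes s: "s > 0"
  shows "\<forall>u\<in>{0..L}. Y s (mu s) u > 0" "Y1 s (mu s) L = 0"
proof -
  let ?m = "mu s"
  have ge0: "Y s ?m u \<ge> 0" if "u \<in> {0..L}" for u
  proof (rule cont_ge_right[of ?m "?m + 1"])
    show "continuous_on {?m..?m + 1} (\<lambda>\<mu>. Y s \<mu> u)" by (rule Y_cont_mu)
    fix x assume "?m < x" "x \<le> ?m + 1"
    then have "x \<in> T s" using above_mu[OF s] by auto
    then show "Y s x u \<ge> 0" using that unfolding T_def by (auto simp: less_imp_le)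
  qed simp
  have d0: "Y1 s ?m L \<ge> 0"
  proof (rule cont_ge_right[of ?m "?m + 1"])
    show "continuous_on {?m..?m + 1} (\<lambda>\<mu>. Y1 s \<mu> L)" by (rule Y1_cont_mu)
    fix x assume "?m < x" "x \<le> ?m + 1"
    then have "x \<in> T s" using above_mu[OF s] by auto
    then show "Y1 s x L \<ge> 0" unfolding T_def by auto
  qed simp
  show pos: "\<forall>u\<in>{0..L}. Y s ?m u > 0"
  proof (rule ccontr)
    assume "\<not> ?thesis"
    then obtain u1 where u1: "u1 \<in> {0..L}" "Y s ?m u1 \<le> 0" by force
    then have z: "Y s ?m u1 = 0" using ge0 by force
    have "u1 \<noteq> 0" using z by (auto simp: Y_0)
    then have u1p: "u1 > 0" using u1 by auto
    show False
    proof (cases "u1 < L")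
      case True
      have "Y1 s ?m u1 = 0"
      proof (rule DERIV_local_min[OF Y_deriv, where d="min u1 (L - u1)"])
        show "0 < min u1 (L - u1)" using True u1p by simp
        show "\<forall>y. \<bar>u1 - y\<bar> < min u1 (L - u1) \<longrightarrow> Y s ?m u1 \<le> Y s ?m y"
        proof (intro allI impI)
          fix y assume "\<bar>u1 - y\<bar> < min u1 (L - u1)"
          then have "y \<in> {0..L}" by auto
          then show "Y s ?m u1 \<le> Y s ?m y" using ge0 z by simp
        qed
      qed
      then show False using not_both_zero z by blast
    next
      case False
      then have uL: "u1 = L" using u1 by simp
      have "Y1 s ?m L = 0"
      proof (rule ccontr)
        assume "Y1 s ?m L \<noteq> 0"
        then have "Y1 s ?m L > 0" using d0 by simp
        from DERIV_pos_inc_left[OF Y_deriv this] obtain d where d: "d > 0"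
          "\<forall>h>0. h < d \<longrightarrow> Y s ?m (L - h) < Y s ?m L" by blast
        define h where "h = min (d/2) L"
        have h: "h > 0" "h < d" "h \<le> L" using d L_pos unfolding h_def by auto
        then have "Y s ?m (L - h) < 0" using d z uL by auto
        moreover have "L - h \<in> {0..L}" using h by auto
        ultimately show False using ge0[of "L - h"] by linarith
      qed
      then show False using not_both_zero z uL by blast
    qed
  qed
  show "Y1 s ?m L = 0"
  proof (rule ccontr)
    assume "Y1 s ?m L \<noteq> 0"
    then have dpos: "Y1 s ?m L > 0" using d0 by simp
    obtain u0 where u0: "u0 \<in> {0..L}" "\<forall>u\<in>{0..L}. Y s ?m u0 \<le> Y s ?m u"
      using continuous_attains_inf[OF compact_Icc _ Y_cont, of 0 L s ?m] L_pos by auto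
    define \<delta> where "\<delta> = Y s ?m u0"
    have \<delta>: "\<delta> > 0" using pos u0 unfolding \<delta>_def by auto
    have uc: "uniformly_continuous_on ({?m - 1..?m} \<times> {0..L}) (\<lambda>w. Y s (fst w) (snd w))"
      by (intro compact_uniformly_continuous compact_Times compact_Icc
          Y_cont_comp continuous_intros)
    then obtain \<eta> where \<eta>: "\<eta> > 0" "\<forall>x\<in>{?m - 1..?m} \<times> {0..L}. \<forall>x'\<in>{?m - 1..?m} \<times> {0..L}.
        dist x' x < \<eta> \<longrightarrow> dist (Y s (fst x') (snd x')) (Y s (fst x) (snd x)) < \<delta>"
      unfolding uniformly_continuous_on_def using \<delta> by blast
    have "isCont (\<lambda>\<mu>. Y1 s \<mu> L) ?m"
      using Y1_cont_mu[of UNIV s L] by (simp add: continuous_on_eq_continuous_at)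
    then obtain \<eta>2 where \<eta>2: "\<eta>2 > 0" "\<forall>\<mu>. dist \<mu> ?m < \<eta>2 \<longrightarrow> dist (Y1 s \<mu> L) (Y1 s ?m L) < Y1 s ?m L"
      using dpos unfolding continuous_at_eps_delta by blast
    define \<mu> where "\<mu> = ?m - min (min \<eta> \<eta>2) 1 / 2"
    have mu1: "\<mu> < ?m" "\<mu> \<ge> ?m - 1" "dist \<mu> ?m < \<eta>" "dist \<mu> ?m < \<eta>2"
      using \<eta> \<eta>2 unfolding \<mu>_def dist_real_def by auto
    have "\<mu> \<in> T s"
    proof -
      have "Y s \<mu> u > 0" if u: "u \<in> {0..L}" for u
      proof -
        have "dist (\<mu>, u) (?m, u) < \<eta>" using mu1 by (simp add: dist_Pair_Pair)
        then have "dist (Y s \<mu> u) (Y s ?m u) < \<delta>"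
          using \<eta>(2)[rule_format, of "(?m, u)" "(\<mu>, u)"] mu1 u by auto
        moreover have "Y s ?m u \<ge> \<delta>" using u0 u unfolding \<delta>_def by auto
        ultimately show ?thesis unfolding dist_real_def by linarith
      qed
      moreover have "Y1 s \<mu> L > 0"
        using \<eta>2(2)[rule_format, OF mu1(4)] dpos unfolding dist_real_def by linarith
      ultimately show ?thesis unfolding T_def by auto
    qed
    then have "?m \<le> \<mu>" unfolding mu_def by (rule cInf_lower[OF _ T_bdd[OF s]])
    then show False using mu1 by simp
  qed
qed

end



lemma int_pos:
  fixes f :: "real \<Rightarrow> real"
  assumes "continuous_on {a..b} f" "a < b" "\<And>x. x \<in> {a..b} \<Longrightarrow> f x \<ge> 0"
    "x0 \<in> {a..b}" "f x0 > 0"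
  shows "integral {a..b} f > 0"
proof -
  have "integral {a..b} f \<ge> 0"
    using assms by (intro integral_nonneg integrable_continuous_interval) auto
  moreover have "integral {a..b} f \<noteq> 0"
    using integral_eq_0_iff[OF assms(1,2,3)] assms(4,5) by auto
  ultimately show ?thesis by simp
qed

lemma sol_parts:
  assumes "spectral_sol a b \<alpha> r l c Q"
  obtains Q1 Q2 where
    "\<And>t. t \<in> {a..b} \<Longrightarrow> (Q has_real_derivative Q1 t) (at t within {a..b})"
    "\<And>t. t \<in> {a..b} \<Longrightarrow> (Q1 has_real_derivative Q2 t) (at t within {a..b})"
    "\<And>t. t \<in> {a<..<b} \<Longrightarrow> (Q has_real_derivative Q1 t) (at t)"
    "\<And>t. t \<in> {a<..<b} \<Longrightarrow> (Q1 has_real_derivative Q2 t) (at t)"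
    "continuous_on {a..b} Q" "continuous_on {a..b} Q1"
    "\<And>t. t \<in> {a<..<b} \<Longrightarrow> \<alpha> * Q2 t + (- l * c + t * l\<^sup>2 + r) * Q t = 0"
    "Q1 a = 0" "Q1 b = 0"
    "\<And>t. t \<in> {a..b} \<Longrightarrow> Q t > 0" "integral {a..b} Q = 1"
proof -
  from assms obtain Q1 Q2 where C: "C2_on_with a b Q Q1 Q2"
    and ode: "\<forall>t\<in>{a<..<b}. \<alpha> * Q2 t + (- l * c + t * l\<^sup>2 + r) * Q t = 0"
    and bc: "Q1 a = 0" "Q1 b = 0"
    and pos: "\<forall>t\<in>{a..b}. Q t > 0" and int: "integral {a..b} Q = 1"
    unfolding spectral_sol_def by blast
  have d1: "\<And>t. t \<in> {a..b} \<Longrightarrow> (Q has_real_derivative Q1 t) (at t within {a..b})"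
    and d2: "\<And>t. t \<in> {a..b} \<Longrightarrow> (Q1 has_real_derivative Q2 t) (at t within {a..b})"
    using C unfolding C2_on_with_def by auto
  have i: "at t within {a..b} = at t" if "t \<in> {a<..<b}" for t
    using that by (intro at_within_interior) simp
  show ?thesis
  proof (rule that[OF d1 d2])
    show "(Q has_real_derivative Q1 t) (at t)" if "t \<in> {a<..<b}" for t
      using d1[of t] i[OF that] that by auto
    show "(Q1 has_real_derivative Q2 t) (at t)" if "t \<in> {a<..<b}" for t
      using d2[of t] i[OF that] that by auto
    show "continuous_on {a..b} Q" by (rule DERIV_continuous_on[OF d1])
    show "continuous_on {a..b} Q1" by (rule DERIV_continuous_on[OF d2])
  qed (use ode bc pos int in auto)
qed

context spec begin

lemma green:
  assumes S1: "spectral_sol a b \<alpha> r l1 c1 P1" and S2: "spectral_sol a b \<alpha> r l2 c2 P2"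
  shows "integral {a..b} (\<lambda>t. ((- l1 * c1 + t * l1\<^sup>2 + r) - (- l2 * c2 + t * l2\<^sup>2 + r)) * P1 t * P2 t) = 0"
proof -
  obtain D1 E1 where p1: "\<And>t. t \<in> {a..b} \<Longrightarrow> (P1 has_real_derivative D1 t) (at t within {a..b})"
    "\<And>t. t \<in> {a..b} \<Longrightarrow> (D1 has_real_derivative E1 t) (at t within {a..b})"
    "\<And>t. t \<in> {a<..<b} \<Longrightarrow> (P1 has_real_derivative D1 t) (at t)"
    "\<And>t. t \<in> {a<..<b} \<Longrightarrow> (D1 has_real_derivative E1 t) (at t)"
    "continuous_on {a..b} P1" "continuous_on {a..b} D1"
    "\<And>t. t \<in> {a<..<b} \<Longrightarrow> \<alpha> * E1 t + (- l1 * c1 + t * l1\<^sup>2 + r) * P1 t = 0"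
    "D1 a = 0" "D1 b = 0" "\<And>t. t \<in> {a..b} \<Longrightarrow> P1 t > 0" "integral {a..b} P1 = 1"
    using sol_parts[OF S1] by blast
  obtain D2 E2 where p2: "\<And>t. t \<in> {a..b} \<Longrightarrow> (P2 has_real_derivative D2 t) (at t within {a..b})"
    "\<And>t. t \<in> {a..b} \<Longrightarrow> (D2 has_real_derivative E2 t) (at t within {a..b})"
    "\<And>t. t \<in> {a<..<b} \<Longrightarrow> (P2 has_real_derivative D2 t) (at t)"
    "\<And>t. t \<in> {a<..<b} \<Longrightarrow> (D2 has_real_derivative E2 t) (at t)"
    "continuous_on {a..b} P2" "continuous_on {a..b} D2"
    "\<And>t. t \<in> {a<..<b} \<Longrightarrow> \<alpha> * E2 t + (- l2 * c2 + t * l2\<^sup>2 + r) * P2 t = 0"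
    "D2 a = 0" "D2 b = 0" "\<And>t. t \<in> {a..b} \<Longrightarrow> P2 t > 0" "integral {a..b} P2 = 1"
    using sol_parts[OF S2] by blast
  define k1 where "k1 t = - l1 * c1 + t * l1\<^sup>2 + r" for t
  define k2 where "k2 t = - l2 * c2 + t * l2\<^sup>2 + r" for t
  define W where "W t = P1 t * D2 t - P2 t * D1 t" for t
  have "((\<lambda>t. (k1 t - k2 t) * P1 t * P2 t / \<alpha>) has_integral (W b - W a)) {a..b}"
  proof (rule fundamental_theorem_of_calculus_interior)
    show "a \<le> b" using ab by simp
    show "continuous_on {a..b} W" unfolding W_def using p1 p2 by (intro continuous_intros) auto
    fix x assume x: "x \<in> {a<..<b}"
    have "(W has_real_derivative (D1 x * D2 x + E2 x * P1 x) - (D2 x * D1 x + E1 x * P2 x)) (at x)"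
      unfolding W_def[abs_def] by (intro DERIV_diff DERIV_mult p1 p2 x)
    moreover have "(D1 x * D2 x + E2 x * P1 x) - (D2 x * D1 x + E1 x * P2 x) = (k1 x - k2 x) * P1 x * P2 x / \<alpha>"
    proof -
      have e: "E1 x = - k1 x * P1 x / \<alpha>" "E2 x = - k2 x * P2 x / \<alpha>"
        using p1(7)[OF x] p2(7)[OF x] al unfolding k1_def k2_def by (auto simp: field_simps)
      show ?thesis unfolding e using al_ne by (simp add: field_simps)
    qed
    ultimately show "(W has_vector_derivative (k1 x - k2 x) * P1 x * P2 x / \<alpha>) (at x)"
      by (simp add: has_real_derivative_iff_has_vector_derivative)
  qed
  moreover have "W b - W a = 0" unfolding W_def using p1 p2 by simp
  ultimately have "((\<lambda>t. (k1 t - k2 t) * P1 t * P2 t / \<alpha>) has_integral 0) {a..b}" by simp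
  then have "integral {a..b} (\<lambda>t. (k1 t - k2 t) * P1 t * P2 t / \<alpha>) = 0"
    by (rule integral_unique)
  then have "integral {a..b} (\<lambda>t. (k1 t - k2 t) * P1 t * P2 t) = 0" using al_ne by simp
  then show ?thesis unfolding k1_def k2_def by simp
qed

end



context spec begin

definition "NN s = integral {a..b} (\<lambda>t. Y s (mu s) (b - t))"
definition "cc l = (mu (l\<^sup>2) + r) / l"
definition "QQ l t = Y (l\<^sup>2) (mu (l\<^sup>2)) (b - t) / NN (l\<^sup>2)"
definition "QQ1 l t = - Y1 (l\<^sup>2) (mu (l\<^sup>2)) (b - t) / NN (l\<^sup>2)"
definition "QQ2 l t = Y2 (l\<^sup>2) (mu (l\<^sup>2)) (b - t) / NN (l\<^sup>2)"

lemma bt_in: "t \<in> {a..b} \<Longrightarrow> b - t \<in> {0..L}" unfolding L_def by auto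

lemma NN_pos: assumes "s > 0" shows "NN s > 0"
  unfolding NN_def
proof (rule int_pos[OF _ ab, of _ a])
  show "continuous_on {a..b} (\<lambda>t. Y s (mu s) (b - t))"
    by (intro Y_cont_comp continuous_intros)
  show "0 \<le> Y s (mu s) (b - t)" if "t \<in> {a..b}" for t
    using mu_props(1)[OF assms] bt_in[OF that] by (auto intro: less_imp_le)
  show "0 < Y s (mu s) (b - a)" using mu_props(1)[OF assms] bt_in[of a] ab by auto
qed (use ab in auto)

lemma QQ_deriv: "(QQ l has_real_derivative QQ1 l t) (at t)"
proof -
  have "((\<lambda>t. Y (l\<^sup>2) (mu (l\<^sup>2)) (b - t)) has_real_derivative Y1 (l\<^sup>2) (mu (l\<^sup>2)) (b - t) * (-1)) (at t)"
    by (rule DERIV_chain2[OF Y_deriv]) (rule DERIV_diff[OF DERIV_const DERIV_ident, simplified])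
  from DERIV_cdivide[OF this, of "NN (l\<^sup>2)"] show ?thesis
    unfolding QQ_def[abs_def] QQ1_def by simp
qed

lemma QQ1_deriv: "(QQ1 l has_real_derivative QQ2 l t) (at t)"
proof -
  have "((\<lambda>t. Y1 (l\<^sup>2) (mu (l\<^sup>2)) (b - t)) has_real_derivative Y2 (l\<^sup>2) (mu (l\<^sup>2)) (b - t) * (-1)) (at t)"
    by (rule DERIV_chain2[OF Y1_deriv]) (rule DERIV_diff[OF DERIV_const DERIV_ident, simplified])
  from DERIV_cdivide[OF DERIV_minus[OF this], of "NN (l\<^sup>2)"] show ?thesis
    unfolding QQ1_def[abs_def] QQ2_def by simp
qed

lemma QQ_cont: "continuous_on U (QQ l)"
  using QQ_deriv by (meson DERIV_continuous_on has_field_derivative_at_within)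
lemma QQ1_cont: "continuous_on U (QQ1 l)"
  using QQ1_deriv by (meson DERIV_continuous_on has_field_derivative_at_within)

lemma QQ_ode: assumes "l > 0"
  shows "\<alpha> * QQ2 l t + (- l * cc l + t * l\<^sup>2 + r) * QQ l t = 0"
proof -
  have l0: "l \<noteq> 0" using assms by simp
  have "NN (l\<^sup>2) > 0" using NN_pos assms by simp
  then show ?thesis unfolding QQ2_def QQ_def Y2_eq cc_def using al_ne l0 by (simp add: field_simps)
qed

lemma QQ2_eq: assumes "l > 0"
  shows "QQ2 l t = - (- l * cc l + t * l\<^sup>2 + r) * QQ l t / \<alpha>"
  using QQ_ode[OF assms, of t] al_ne by (simp add: field_simps)

lemma QQ_pos: assumes "l > 0" "t \<in> {a..b}" shows "QQ l t > 0"
proof -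
  have "l\<^sup>2 > 0" using assms by simp
  then show ?thesis unfolding QQ_def using mu_props(1) NN_pos bt_in[OF assms(2)] by auto
qed

lemma QQ1_a: assumes "l > 0" shows "QQ1 l a = 0"
proof -
  have "l\<^sup>2 > 0" using assms by simp
  then show ?thesis unfolding QQ1_def using mu_props(2) by (simp add: L_def)
qed

lemma QQ1_b: "QQ1 l b = 0" unfolding QQ1_def by (simp add: Y1_0)

lemma QQ_int: assumes "l > 0" shows "integral {a..b} (QQ l) = 1"
proof -
  have "l\<^sup>2 > 0" using assms by simp
  then have "NN (l\<^sup>2) > 0" by (rule NN_pos)
  then show ?thesis unfolding QQ_def[abs_def] NN_def by simp
qed

lemma QQ_sol: assumes "l > 0" shows "spectral_sol a b \<alpha> r l (cc l) (QQ l)"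
proof -
  have C: "C2_on_with a b (QQ l) (QQ1 l) (QQ2 l)"
    unfolding C2_on_with_def
  proof (intro conjI ballI)
    show "(QQ l has_real_derivative QQ1 l t) (at t within {a..b})" for t
      by (rule has_field_derivative_at_within[OF QQ_deriv])
    show "(QQ1 l has_real_derivative QQ2 l t) (at t within {a..b})" for t
      by (rule has_field_derivative_at_within[OF QQ1_deriv])
    have "continuous_on {a..b} (\<lambda>t. - (- l * cc l + t * l\<^sup>2 + r) * QQ l t / \<alpha>)"
      by (intro continuous_intros QQ_cont) (use al_ne in auto)
    then show "continuous_on {a..b} (QQ2 l)" using QQ2_eq[OF assms] by simp
  qed
  show ?thesis
  unfolding spectral_sol_def
proof (intro conjI ballI)
  show "\<exists>Q1 Q2. C2_on_with a b (QQ l) Q1 Q2 \<and>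
        (\<forall>t\<in>{a<..<b}. \<alpha> * Q2 t + (- l * cc l + t * l\<^sup>2 + r) * QQ l t = 0) \<and>
        Q1 a = 0 \<and> Q1 b = 0"
    using C QQ_ode[OF assms] QQ1_a[OF assms] QQ1_b by blast
  show "QQ l t > 0" if "t \<in> {a..b}" for t using QQ_pos assms that by auto
  show "QQ l integrable_on {a..b}" by (intro integrable_continuous_interval QQ_cont)
  show "integral {a..b} (QQ l) = 1" by (rule QQ_int[OF assms])
qed
qed

end



context spec begin

lemma uniq:
  assumes l: "l > 0" and S1: "spectral_sol a b \<alpha> r l c1 P1" and S2: "spectral_sol a b \<alpha> r l c2 P2"
  shows "c1 = c2 \<and> (\<forall>t\<in>{a..b}. P1 t = P2 t)"
proof -
  obtain D1 E1 where p1: "\<And>t. t \<in> {a..b} \<Longrightarrow> (P1 has_real_derivative D1 t) (at t within {a..b})"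
    "\<And>t. t \<in> {a..b} \<Longrightarrow> (D1 has_real_derivative E1 t) (at t within {a..b})"
    "\<And>t. t \<in> {a<..<b} \<Longrightarrow> (P1 has_real_derivative D1 t) (at t)"
    "\<And>t. t \<in> {a<..<b} \<Longrightarrow> (D1 has_real_derivative E1 t) (at t)"
    "continuous_on {a..b} P1" "continuous_on {a..b} D1"
    "\<And>t. t \<in> {a<..<b} \<Longrightarrow> \<alpha> * E1 t + (- l * c1 + t * l\<^sup>2 + r) * P1 t = 0"
    "D1 a = 0" "D1 b = 0" "\<And>t. t \<in> {a..b} \<Longrightarrow> P1 t > 0" "integral {a..b} P1 = 1"
    using sol_parts[OF S1] by blast
  obtain D2 E2 where p2: "\<And>t. t \<in> {a..b} \<Longrightarrow> (P2 has_real_derivative D2 t) (at t within {a..b})"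
    "\<And>t. t \<in> {a..b} \<Longrightarrow> (D2 has_real_derivative E2 t) (at t within {a..b})"
    "\<And>t. t \<in> {a<..<b} \<Longrightarrow> (P2 has_real_derivative D2 t) (at t)"
    "\<And>t. t \<in> {a<..<b} \<Longrightarrow> (D2 has_real_derivative E2 t) (at t)"
    "continuous_on {a..b} P2" "continuous_on {a..b} D2"
    "\<And>t. t \<in> {a<..<b} \<Longrightarrow> \<alpha> * E2 t + (- l * c2 + t * l\<^sup>2 + r) * P2 t = 0"
    "D2 a = 0" "D2 b = 0" "\<And>t. t \<in> {a..b} \<Longrightarrow> P2 t > 0" "integral {a..b} P2 = 1"
    using sol_parts[OF S2] by blast
  have ipos: "integral {a..b} (\<lambda>t. P1 t * P2 t) > 0"
    by (rule int_pos[OF _ ab, of _ a]) (use p1 p2 ab in \<open>auto intro!: continuous_intros less_imp_le\<close>)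
  have "integral {a..b} (\<lambda>t. ((- l * c1 + t * l\<^sup>2 + r) - (- l * c2 + t * l\<^sup>2 + r)) * P1 t * P2 t) = 0"
    by (rule green[OF S1 S2])
  moreover have "integral {a..b} (\<lambda>t. ((- l * c1 + t * l\<^sup>2 + r) - (- l * c2 + t * l\<^sup>2 + r)) * P1 t * P2 t)
     = (l * (c2 - c1)) * integral {a..b} (\<lambda>t. P1 t * P2 t)"
    by (simp add: algebra_simps flip: integral_mult_right)
  ultimately have c: "c1 = c2" using ipos l by simp
  define W where "W t = P1 t * D2 t - P2 t * D1 t" for t
  have Wc: "continuous_on {a..b} W" unfolding W_def using p1 p2 by (intro continuous_intros) auto
  have W0: "W x = 0" if x: "x \<in> {a..b}" for x
  proof -
    have "W x = W a"
    proof (rule DERIV_isconst2[OF ab Wc])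
      fix y assume y: "a < y" "y < b"
      have "(W has_real_derivative (D1 y * D2 y + E2 y * P1 y) - (D2 y * D1 y + E1 y * P2 y)) (at y)"
        unfolding W_def[abs_def] by (intro DERIV_diff DERIV_mult p1 p2) (use y in auto)
      moreover have "(D1 y * D2 y + E2 y * P1 y) - (D2 y * D1 y + E1 y * P2 y) = 0"
      proof -
        have e: "E1 y = - (- l * c1 + y * l\<^sup>2 + r) * P1 y / \<alpha>" "E2 y = - (- l * c1 + y * l\<^sup>2 + r) * P2 y / \<alpha>"
          using p1(7)[of y] p2(7)[of y] y c al_ne by (auto simp: field_simps)
        show ?thesis unfolding e by (simp add: field_simps)
      qed
      ultimately show "(W has_real_derivative 0) (at y)" by simp
    qed (use x in auto)
    then show ?thesis unfolding W_def using p1(8) p2(8) by simp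
  qed
  define R where "R t = P2 t / P1 t" for t
  have Rc: "continuous_on {a..b} R" unfolding R_def
  proof (intro continuous_intros p1(5) p2(5) ballI)
    fix t assume "t \<in> {a..b}"
    then have "P1 t > 0" by (rule p1(10))
    then show "P1 t \<noteq> 0" by simp
  qed
  have R: "R x = R a" if x: "x \<in> {a..b}" for x
  proof (rule DERIV_isconst2[OF ab Rc])
    fix y assume y: "a < y" "y < b"
    have P1y: "P1 y > 0" using p1(10)[of y] y by auto
    have "(R has_real_derivative (D2 y * P1 y - P2 y * D1 y) / (P1 y * P1 y)) (at y)"
      unfolding R_def[abs_def] by (intro DERIV_divide p1 p2) (use y P1y in auto)
    moreover have "D2 y * P1 y - P2 y * D1 y = W y" unfolding W_def by simp
    ultimately show "(R has_real_derivative 0) (at y)" using W0[of y] y by simp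
  qed (use x in auto)
  have eq: "P2 x = R a * P1 x" if "x \<in> {a..b}" for x
    using R[OF that] p1(10)[OF that] unfolding R_def by (simp add: field_simps)
  have "integral {a..b} P2 = integral {a..b} (\<lambda>x. R a * P1 x)"
    by (rule integral_cong) (use eq in auto)
  then have "R a = 1" using p1(11) p2(11) by simp
  then show ?thesis using c eq by simp
qed

definition "TT l = integral {a..b} (\<lambda>t. t * QQ l t)"

lemma TT_eq: assumes l: "l > 0" shows "- l * cc l + l\<^sup>2 * TT l + r = 0"
proof -
  have "(QQ2 l has_integral (QQ1 l b - QQ1 l a)) {a..b}"
    by (rule fundamental_theorem_of_calculus) (use ab QQ1_deriv in \<open>auto simp: has_real_derivative_iff_has_vector_derivative[symmetric] intro: has_field_derivative_at_within\<close>)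
  then have "integral {a..b} (QQ2 l) = 0" using QQ1_a[OF l] QQ1_b by (simp add: integral_unique)
  moreover have "integral {a..b} (QQ2 l) = - integral {a..b} (\<lambda>t. (- l * cc l + r) * QQ l t + l\<^sup>2 * (t * QQ l t)) / \<alpha>"
  proof -
    have "integral {a..b} (QQ2 l) = integral {a..b} (\<lambda>t. - ((- l * cc l + r) * QQ l t + l\<^sup>2 * (t * QQ l t)) / \<alpha>)"
      by (rule integral_cong) (simp add: QQ2_eq[OF l] algebra_simps)
    also have "\<dots> = - integral {a..b} (\<lambda>t. (- l * cc l + r) * QQ l t + l\<^sup>2 * (t * QQ l t)) / \<alpha>"
      by (simp only: integral_divide integral_neg minus_divide_left)
    finally show ?thesis .
  qed
  ultimately have "integral {a..b} (\<lambda>t. (- l * cc l + r) * QQ l t + l\<^sup>2 * (t * QQ l t)) = 0"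
    using al_ne by simp
  moreover have "integral {a..b} (\<lambda>t. (- l * cc l + r) * QQ l t + l\<^sup>2 * (t * QQ l t))
      = (- l * cc l + r) * integral {a..b} (QQ l) + l\<^sup>2 * TT l"
    unfolding TT_def
    by (subst integral_add) (auto intro!: integrable_continuous_interval continuous_intros QQ_cont)
  ultimately show ?thesis using QQ_int[OF l] by simp
qed

lemma QQ2_sign: assumes l: "l > 0" and t: "t \<in> {a..b}"
  shows "QQ2 l t = - (l\<^sup>2 * (t - TT l)) * QQ l t / \<alpha>"
proof -
  have "- l * cc l + r = - l\<^sup>2 * TT l" using TT_eq[OF l] by simp
  then have "- l * cc l + t * l\<^sup>2 + r = l\<^sup>2 * (t - TT l)" by (simp add: algebra_simps)
  then show ?thesis using QQ2_eq[OF l, of t] by simp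
qed

lemma QQ2_pos: assumes l: "l > 0" and t: "t \<in> {a..b}" "t < TT l" shows "QQ2 l t > 0"
proof -
  have "QQ l t > 0" using QQ_pos l t by auto
  moreover have "l\<^sup>2 * (t - TT l) < 0" using l t by (simp add: mult_pos_neg)
  then have "l\<^sup>2 * (t - TT l) * QQ l t < 0" using \<open>QQ l t > 0\<close> by (simp add: mult_neg_pos)
  then show ?thesis unfolding QQ2_sign[OF l t(1)] using al by (simp add: divide_neg_pos)
qed

lemma QQ2_neg: assumes l: "l > 0" and t: "t \<in> {a..b}" "t > TT l" shows "QQ2 l t < 0"
proof -
  have "QQ l t > 0" using QQ_pos l t by auto
  moreover have "l\<^sup>2 * (t - TT l) > 0" using l t by simp
  then have "l\<^sup>2 * (t - TT l) * QQ l t > 0" using \<open>QQ l t > 0\<close> by simp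
  then show ?thesis unfolding QQ2_sign[OF l t(1)] using al by (simp add: divide_pos_pos)
qed

lemma QQ1_pos: assumes l: "l > 0" and x: "x \<in> {a<..<b}" shows "QQ1 l x > 0"
proof (cases "x \<le> TT l")
  case True
  have "QQ1 l a < QQ1 l x"
  proof (rule DERIV_pos_imp_increasing_open[of a x "QQ1 l"])
    show "a < x" using x by simp
    fix y assume "a < y" "y < x"
    then show "\<exists>z. DERIV (QQ1 l) y :> z \<and> z > 0" using QQ1_deriv QQ2_pos[OF l, of y] x True by force
  qed (rule QQ1_cont)
  then show ?thesis using QQ1_a[OF l] by simp
next
  case False
  have "QQ1 l x > QQ1 l b"
  proof (rule DERIV_neg_imp_decreasing_open[of x b "QQ1 l"])
    show "x < b" using x by simp
    fix y assume "x < y" "y < b"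
    then show "\<exists>z. DERIV (QQ1 l) y :> z \<and> z < 0" using QQ1_deriv QQ2_neg[OF l, of y] x False by force
  qed (rule QQ1_cont)
  then show ?thesis using QQ1_b by simp
qed

lemma QQ_mono: assumes l: "l > 0" and xy: "x \<in> {a..b}" "y \<in> {a..b}" "x < y" shows "QQ l x < QQ l y"
proof (rule DERIV_pos_imp_increasing_open[OF xy(3)])
  fix z assume "x < z" "z < y"
  then show "\<exists>w. DERIV (QQ l) z :> w \<and> w > 0" using QQ_deriv QQ1_pos[OF l, of z] xy by force
qed (rule QQ_cont)

lemma int_lin: "((\<lambda>t. t - (a+b)/2) has_integral 0) {a..b}"
proof -
  have "((\<lambda>t. t - (a+b)/2) has_integral ((\<lambda>t. (t - (a+b)/2)^2/2) b - (\<lambda>t. (t - (a+b)/2)^2/2) a)) {a..b}"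
    by (rule fundamental_theorem_of_calculus) (use ab in \<open>auto simp: has_real_derivative_iff_has_vector_derivative[symmetric] intro!: derivative_eq_intros\<close>)
  moreover have "(\<lambda>t. (t - (a+b)/2)^2/2) b - (\<lambda>t. (t - (a+b)/2)^2/2) a = 0"
    by (simp add: power2_eq_square field_simps)
  ultimately show ?thesis by simp
qed

lemma TT_gt: assumes l: "l > 0" shows "TT l > (a + b)/2" "TT l < b"
proof -
  define m where "m = (a+b)/2"
  have m: "a < m" "m < b" using ab unfolding m_def by auto
  have "integral {a..b} (\<lambda>t. (t - m) * (QQ l t - QQ l m)) > 0"
  proof (rule int_pos[OF _ ab, of _ b])
    show "continuous_on {a..b} (\<lambda>t. (t - m) * (QQ l t - QQ l m))" by (intro continuous_intros QQ_cont)
    show "0 \<le> (t - m) * (QQ l t - QQ l m)" if "t \<in> {a..b}" for t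
    proof (cases "t < m")
      case True then show ?thesis using QQ_mono[OF l, of t m] that m by (intro mult_nonpos_nonpos) auto
    next
      case False then show ?thesis using QQ_mono[OF l, of m t] that m
        by (cases "t = m") (auto intro!: mult_nonneg_nonneg)
    qed
    show "0 < (b - m) * (QQ l b - QQ l m)" using QQ_mono[OF l, of m b] m by simp
  qed (use ab in auto)
  moreover have "integral {a..b} (\<lambda>t. (t - m) * (QQ l t - QQ l m)) = TT l - m"
  proof -
    have "integral {a..b} (\<lambda>t. (t - m) * (QQ l t - QQ l m))
        = integral {a..b} (\<lambda>t. t * QQ l t - m * QQ l t - QQ l m * (t - m))"
      by (rule integral_cong) (simp add: algebra_simps)
    also have "\<dots> = TT l - m * integral {a..b} (QQ l) - QQ l m * integral {a..b} (\<lambda>t. t - m)"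
      unfolding TT_def
      by (subst integral_diff integral_diff, auto intro!: integrable_continuous_interval continuous_intros QQ_cont)+
    also have "integral {a..b} (\<lambda>t. t - m) = 0" using int_lin unfolding m_def by (simp add: integral_unique)
    finally show ?thesis using QQ_int[OF l] by simp
  qed
  ultimately show "TT l > (a + b)/2" unfolding m_def by simp
  have "integral {a..b} (\<lambda>t. (b - t) * QQ l t) > 0"
  proof (rule int_pos[OF _ ab, of _ a])
    show "continuous_on {a..b} (\<lambda>t. (b - t) * QQ l t)" by (intro continuous_intros QQ_cont)
    show "0 \<le> (b - t) * QQ l t" if "t \<in> {a..b}" for t using QQ_pos[OF l that] that by simp
    show "0 < (b - a) * QQ l a" using QQ_pos[OF l, of a] ab by simp
  qed (use ab in auto)
  moreover have "integral {a..b} (\<lambda>t. (b - t) * QQ l t) = b - TT l"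
  proof -
    have "integral {a..b} (\<lambda>t. (b - t) * QQ l t) = integral {a..b} (\<lambda>t. b * QQ l t - t * QQ l t)"
      by (rule integral_cong) (simp add: algebra_simps)
    also have "\<dots> = b * integral {a..b} (QQ l) - TT l"
      unfolding TT_def by (subst integral_diff) (auto intro!: integrable_continuous_interval continuous_intros QQ_cont)
    finally show ?thesis using QQ_int[OF l] by simp
  qed
  ultimately show "TT l < b" by simp
qed

lemma QQ_convex: assumes l: "l > 0" shows "convex_on {a..TT l} (QQ l)"
proof (rule convex_on_realI[where f' = "QQ1 l"])
  show "connected {a..TT l}" by simp
  show "(QQ l has_real_derivative QQ1 l x) (at x)" for x by (rule QQ_deriv)
  fix x y assume xy: "x \<in> {a..TT l}" "y \<in> {a..TT l}" "x \<le> y"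
  show "QQ1 l x \<le> QQ1 l y"
  proof (rule DERIV_nonneg_imp_increasing_open[OF xy(3)])
    fix z assume z: "x < z" "z < y"
    have "z \<in> {a..b}" "z < TT l" using z xy TT_gt[OF l] by auto
    then show "\<exists>w. DERIV (QQ1 l) z :> w \<and> w \<ge> 0" using QQ1_deriv QQ2_pos[OF l] by (force intro: less_imp_le)
  qed (rule QQ1_cont)
qed

lemma QQ_concave: assumes l: "l > 0" shows "concave_on {TT l..b} (QQ l)"
  unfolding concave_on_def
proof (rule convex_on_realI[where f' = "\<lambda>x. - QQ1 l x"])
  show "connected {TT l..b}" by simp
  show "((\<lambda>x. - QQ l x) has_real_derivative - QQ1 l x) (at x)" for x by (intro DERIV_minus QQ_deriv)
  fix x y assume xy: "x \<in> {TT l..b}" "y \<in> {TT l..b}" "x \<le> y"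
  show "- QQ1 l x \<le> - QQ1 l y"
  proof (rule DERIV_nonneg_imp_increasing_open[OF xy(3)])
    fix z assume z: "x < z" "z < y"
    have "z \<in> {a..b}" "z > TT l" using z xy TT_gt[OF l] by auto
    then show "\<exists>w. DERIV (\<lambda>x. - QQ1 l x) z :> w \<and> w \<ge> 0"
      using DERIV_minus[OF QQ1_deriv] QQ2_neg[OF l] by (force intro: less_imp_le)
  qed (intro continuous_intros QQ1_cont)
qed

end



context spec begin

lemma l_cc: "l > 0 \<Longrightarrow> l * cc l = mu (l\<^sup>2) + r"
  unfolding cc_def by simp

definition "II l1 l2 = integral {a..b} (\<lambda>t. QQ l1 t * QQ l2 t)"
definition "JJ l1 l2 = integral {a..b} (\<lambda>t. t * (QQ l1 t * QQ l2 t))"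

lemma II_pos: "l1 > 0 \<Longrightarrow> l2 > 0 \<Longrightarrow> II l1 l2 > 0"
  unfolding II_def
  by (rule int_pos[OF _ ab, of _ a]) (use ab QQ_pos in \<open>auto intro!: continuous_intros QQ_cont less_imp_le\<close>)

lemma JJ_bounds: assumes "l1 > 0" "l2 > 0"
  shows "a * II l1 l2 \<le> JJ l1 l2" "JJ l1 l2 \<le> b * II l1 l2"
proof -
  have int: "(\<lambda>t. QQ l1 t * QQ l2 t) integrable_on {a..b}" "(\<lambda>t. t * (QQ l1 t * QQ l2 t)) integrable_on {a..b}"
    by (auto intro!: integrable_continuous_interval continuous_intros QQ_cont)
  have nn: "QQ l1 t * QQ l2 t \<ge> 0" if "t \<in> {a..b}" for t
    using QQ_pos assms that by (auto intro: less_imp_le)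
  show "a * II l1 l2 \<le> JJ l1 l2" unfolding II_def JJ_def
    by (subst integral_mult_right[symmetric], rule integral_le)
      (use int nn in \<open>auto intro!: integrable_continuous_interval continuous_intros QQ_cont mult_right_mono\<close>)
  show "JJ l1 l2 \<le> b * II l1 l2" unfolding II_def JJ_def
    by (subst integral_mult_right[symmetric], rule integral_le)
      (use int nn in \<open>auto intro!: integrable_continuous_interval continuous_intros QQ_cont mult_right_mono\<close>)
qed

lemma mu_rel: assumes l: "l1 > 0" "l2 > 0"
  shows "(mu (l2\<^sup>2) - mu (l1\<^sup>2)) * II l1 l2 = (l2\<^sup>2 - l1\<^sup>2) * JJ l1 l2"
proof -
  have g: "integral {a..b} (\<lambda>t. ((- l1 * cc l1 + t * l1\<^sup>2 + r) - (- l2 * cc l2 + t * l2\<^sup>2 + r)) * QQ l1 t * QQ l2 t) = 0"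
    by (rule green[OF QQ_sol QQ_sol]) (use l in auto)
  have "integral {a..b} (\<lambda>t. ((- l1 * cc l1 + t * l1\<^sup>2 + r) - (- l2 * cc l2 + t * l2\<^sup>2 + r)) * QQ l1 t * QQ l2 t)
      = integral {a..b} (\<lambda>t. (mu (l2\<^sup>2) - mu (l1\<^sup>2)) * (QQ l1 t * QQ l2 t) - (l2\<^sup>2 - l1\<^sup>2) * (t * (QQ l1 t * QQ l2 t)))"
  proof (rule integral_cong)
    fix t
    have "- l1 * cc l1 + t * l1\<^sup>2 + r = t * l1\<^sup>2 - mu (l1\<^sup>2)" "- l2 * cc l2 + t * l2\<^sup>2 + r = t * l2\<^sup>2 - mu (l2\<^sup>2)"
      using l_cc l by auto
    then show "((- l1 * cc l1 + t * l1\<^sup>2 + r) - (- l2 * cc l2 + t * l2\<^sup>2 + r)) * QQ l1 t * QQ l2 t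
      = (mu (l2\<^sup>2) - mu (l1\<^sup>2)) * (QQ l1 t * QQ l2 t) - (l2\<^sup>2 - l1\<^sup>2) * (t * (QQ l1 t * QQ l2 t))"
      by (simp only:) (simp add: algebra_simps)
  qed
  also have "\<dots> = (mu (l2\<^sup>2) - mu (l1\<^sup>2)) * II l1 l2 - (l2\<^sup>2 - l1\<^sup>2) * JJ l1 l2"
    unfolding II_def JJ_def
    by (subst integral_diff) (auto intro!: integrable_continuous_interval continuous_intros QQ_cont)
  finally show ?thesis using g by simp
qed

lemma mu_lip: "b-lipschitz_on {0<..} mu"
proof (rule lipschitz_onI)
  show "0 \<le> b" using ab a_pos by simp
  fix s1 s2 :: real assume s: "s1 \<in> {0<..}" "s2 \<in> {0<..}"
  define l1 where "l1 = sqrt s1"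
  define l2 where "l2 = sqrt s2"
  have l: "l1 > 0" "l2 > 0" "l1\<^sup>2 = s1" "l2\<^sup>2 = s2" using s unfolding l1_def l2_def by auto
  have I: "II l1 l2 > 0" by (rule II_pos) (use l in auto)
  have e: "mu s2 - mu s1 = (s2 - s1) * (JJ l1 l2 / II l1 l2)"
    using mu_rel[OF l(1,2)] I l by (simp add: field_simps)
  have "\<bar>JJ l1 l2 / II l1 l2\<bar> \<le> b"
  proof -
    have "a * II l1 l2 \<le> JJ l1 l2" "JJ l1 l2 \<le> b * II l1 l2" using JJ_bounds l by auto
    moreover have "a * II l1 l2 > 0" using I a_pos by simp
    ultimately have "JJ l1 l2 \<ge> 0" "JJ l1 l2 \<le> b * II l1 l2" by linarith+
    then have "JJ l1 l2 / II l1 l2 \<ge> 0" "JJ l1 l2 / II l1 l2 \<le> b"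
      using I by (auto simp: divide_simps mult.commute)
    then show ?thesis by simp
  qed
  then have "\<bar>mu s2 - mu s1\<bar> \<le> \<bar>s2 - s1\<bar> * b" unfolding e abs_mult by (intro mult_left_mono) auto
  then show "dist (mu s1) (mu s2) \<le> b * dist s1 s2" by (simp add: dist_real_def abs_minus_commute mult.commute)
qed

lemma mu_cont: "continuous_on {0<..} mu"
  by (rule lipschitz_on_continuous_on[OF mu_lip])

lemma mu_sq_cont: "U \<subseteq> {0<..} \<Longrightarrow> continuous_on U (\<lambda>l. mu (l\<^sup>2))"
  by (rule continuous_on_compose2[OF mu_cont]) (auto intro!: continuous_intros)

lemma cc_cont: "continuous_on {0<..} cc"
  unfolding cc_def[abs_def] by (intro continuous_intros mu_sq_cont) auto

end



context spec begin

lemma cc_form: assumes l: "l > 0" shows "cc l = l * TT l + r / l"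
  using TT_eq[OF l] l by (simp add: field_simps power2_eq_square)

lemma cc_lower: assumes l: "l > 0" shows "cc l > l * a + r / l"
proof -
  have "TT l > a" using TT_gt(1)[OF l] ab by simp
  then have "l * TT l > l * a" using l by simp
  then show ?thesis using cc_form[OF l] by simp
qed

lemma cc_min: "\<exists>ls>0. \<forall>l>0. cc ls \<le> cc l"
proof -
  define M where "M = cc 1"
  have M: "M > a + r" using cc_lower[of 1] unfolding M_def by simp
  define lo where "lo = r / (M + 1)"
  define hi where "hi = (M + 1) / a"
  have lo: "lo > 0" "lo \<le> 1" using M r_pos a_pos unfolding lo_def by (auto simp: field_simps)
  have hi: "hi \<ge> 1" using M r_pos a_pos unfolding hi_def by (auto simp: field_simps)
  have "continuous_on {lo..hi} cc" using lo by (intro continuous_on_subset[OF cc_cont]) auto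
  then obtain ls where ls: "ls \<in> {lo..hi}" "\<forall>y\<in>{lo..hi}. cc ls \<le> cc y"
    using continuous_attains_inf[OF compact_Icc, of lo hi cc] lo hi by auto
  have lsp: "ls > 0" using ls lo by auto
  have "cc ls \<le> M" using ls lo hi unfolding M_def by auto
  moreover have "cc l > M" if l: "l > 0" "l \<notin> {lo..hi}" for l
  proof (cases "l < lo")
    case True
    have "r / l > r / lo" using True l r_pos by (simp add: divide_strict_left_mono)
    also have "r / lo = M + 1" unfolding lo_def using r_pos M a_pos by simp
    finally have "r / l > M + 1" .
    then show ?thesis using cc_lower[OF l(1)] l a_pos by (smt (verit) mult_pos_pos)
  next
    case False
    then have "l > hi" using l by auto
    then have "l * a > hi * a" using a_pos by simp
    also have "hi * a = M + 1" unfolding hi_def using a_pos by simp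
    finally have "l * a > M + 1" .
    moreover have "r / l > 0" using r_pos l by simp
    ultimately show ?thesis using cc_lower[OF l(1)] by simp
  qed
  ultimately have "\<forall>l>0. cc ls \<le> cc l" using ls by force
  then show ?thesis using lsp by blast
qed

lemma NN_sq_cont: assumes U: "U \<subseteq> {0<..}" shows "continuous_on U (\<lambda>l. NN (l\<^sup>2))"
proof -
  have "continuous_on U (\<lambda>l. integral (cbox a b) (\<lambda>t. Y (l\<^sup>2) (mu (l\<^sup>2)) (b - t)))"
  proof (rule integral_continuous_on_param)
    have "continuous_on (U \<times> cbox a b) (\<lambda>x. Y ((fst x)\<^sup>2) (mu ((fst x)\<^sup>2)) (b - snd x))"
      by (intro Y_cont_comp continuous_intros continuous_on_compose2[OF mu_sq_cont[OF U] continuous_on_fst])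
        (auto intro: continuous_on_id)
    then show "continuous_on (U \<times> cbox a b) (\<lambda>(x, t). Y (x\<^sup>2) (mu (x\<^sup>2)) (b - t))"
      by (simp add: case_prod_beta')
  qed
  then show ?thesis unfolding NN_def cbox_interval .
qed

lemma QQ_joint: assumes U: "U \<subseteq> {0<..}" shows "continuous_on (U \<times> {a..b}) (\<lambda>(l, t). QQ l t)"
proof -
  have "continuous_on (U \<times> {a..b}) (\<lambda>x. Y ((fst x)\<^sup>2) (mu ((fst x)\<^sup>2)) (b - snd x) / NN ((fst x)\<^sup>2))"
  proof (intro continuous_intros Y_cont_comp continuous_on_compose2[OF mu_sq_cont[OF U] continuous_on_fst]
      continuous_on_compose2[OF NN_sq_cont[OF U] continuous_on_fst] ballI)
    fix x assume "x \<in> U \<times> {a..b}"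
    then have "(fst x)\<^sup>2 > 0" using U by auto
    then show "NN ((fst x)\<^sup>2) \<noteq> 0" using NN_pos by (metis less_irrefl)
  qed (auto intro: continuous_on_id)
  then show ?thesis unfolding QQ_def by (simp add: case_prod_beta')
qed

lemma int_QQ_cont: assumes U: "U \<subseteq> {0<..}" and h: "continuous_on {a..b} h"
  shows "continuous_on U (\<lambda>l. integral {a..b} (\<lambda>t. h t * QQ l t))"
proof -
  have "continuous_on U (\<lambda>l. integral (cbox a b) (\<lambda>t. h t * QQ l t))"
  proof (rule integral_continuous_on_param)
    have "continuous_on (U \<times> cbox a b) (\<lambda>x. h (snd x) * (\<lambda>(l, t). QQ l t) x)"
      by (intro continuous_intros continuous_on_compose2[OF h continuous_on_snd]
          continuous_on_subset[OF QQ_joint[OF U]]) (auto simp: cbox_interval)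
    then show "continuous_on (U \<times> cbox a b) (\<lambda>(x, t). h t * QQ x t)"
      by (simp add: case_prod_beta')
  qed
  then show ?thesis unfolding cbox_interval .
qed

lemma part3:
  assumes ls: "ls > 0" and min: "\<forall>l>0. cc ls \<le> cc l"
  shows "cc ls > 0" "cc ls > 2 * sqrt (r * TT ls)" "cc ls \<ge> ls * (b + a)"
proof -
  let ?c = "cc ls"
  show cpos: "?c > 0" using cc_lower[OF ls] ls a_pos r_pos by (smt (verit) divide_pos_pos mult_pos_pos)
  define Dq where "Dq l = JJ ls l / II ls l" for l
  have ineq: "(l + ls) * Dq l \<le> ?c" if l: "0 < l" "l < ls" for l
  proof -
    have I: "II ls l > 0" using II_pos ls l by auto
    have rel: "mu (l\<^sup>2) - mu (ls\<^sup>2) = (l\<^sup>2 - ls\<^sup>2) * Dq l"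
      using mu_rel[OF ls l(1)] I unfolding Dq_def by (simp add: field_simps)
    have "l * ?c \<le> l * cc l" using min l by (intro mult_left_mono) auto
    also have "\<dots> = mu (l\<^sup>2) + r" using l_cc l by simp
    also have "\<dots> = mu (ls\<^sup>2) + r + (l\<^sup>2 - ls\<^sup>2) * Dq l" using rel by simp
    also have "mu (ls\<^sup>2) + r = ls * ?c" using l_cc ls by simp
    finally have "(l - ls) * ?c \<le> (l - ls) * ((l + ls) * Dq l)"
      by (simp add: algebra_simps power2_eq_square)
    then show ?thesis using l by (simp add: mult_le_cancel_left)
  qed
  define B where "B = JJ ls ls / II ls ls"
  have Dcont: "continuous_on {ls/2..ls} Dq"
  proof -
    have U: "{ls/2..ls} \<subseteq> {0<..}" using ls by auto
    have c1: "continuous_on {ls/2..ls} (\<lambda>l. JJ ls l)"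
      unfolding JJ_def using int_QQ_cont[OF U, of "\<lambda>t. t * QQ ls t"]
      by (simp add: mult.assoc continuous_intros QQ_cont)
    have c2: "continuous_on {ls/2..ls} (\<lambda>l. II ls l)"
      unfolding II_def using int_QQ_cont[OF U, of "QQ ls"] by (simp add: QQ_cont)
    show ?thesis unfolding Dq_def
    proof (intro continuous_intros c1 c2 ballI)
      fix l assume "l \<in> {ls/2..ls}"
      then have "II ls l > 0" using ls by (intro II_pos) auto
      then show "II ls l \<noteq> 0" by simp
    qed
  qed
  have "?c - (ls + ls) * Dq ls \<ge> 0"
  proof (rule cont_ge_left[of "ls/2" ls "\<lambda>l. ?c - (l + ls) * Dq l"])
    show "continuous_on {ls / 2..ls} (\<lambda>l. ?c - (l + ls) * Dq l)" by (intro continuous_intros Dcont)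
    show "ls / 2 < ls" using ls by simp
    fix x assume "ls / 2 \<le> x" "x < ls"
    then show "?c - (x + ls) * Dq x \<ge> 0" using ineq[of x] ls by simp
  qed
  then have cB: "?c \<ge> 2 * ls * B" unfolding Dq_def B_def by simp
  define T where "T = TT ls"
  have Tb: "(a+b)/2 < T" "T < b" using TT_gt[OF ls] unfolding T_def by auto
  have "integral {a..b} (\<lambda>t. (t - T) * QQ ls t * (QQ ls t - QQ ls T)) > 0"
  proof (rule int_pos[OF _ ab, of _ b])
    show "continuous_on {a..b} (\<lambda>t. (t - T) * QQ ls t * (QQ ls t - QQ ls T))" by (intro continuous_intros QQ_cont)
    have Ta: "T \<in> {a..b}" using Tb ab by auto
    show "0 \<le> (t - T) * QQ ls t * (QQ ls t - QQ ls T)" if t: "t \<in> {a..b}" for t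
    proof -
      have q: "QQ ls t > 0" using QQ_pos[OF ls t] .
      show ?thesis
      proof (cases "t < T")
        case True
        then have "QQ ls t < QQ ls T" using QQ_mono[OF ls t Ta] by simp
        then show ?thesis using True q by (simp add: mult_nonpos_nonpos mult_nonpos_nonneg)
      next
        case False
        then show ?thesis using QQ_mono[OF ls Ta t] q by (cases "t = T") (auto intro!: mult_nonneg_nonneg)
      qed
    qed
    show "0 < (b - T) * QQ ls b * (QQ ls b - QQ ls T)"
      using QQ_mono[OF ls Ta, of b] QQ_pos[OF ls, of b] Tb ab by simp
  qed (use ab in auto)
  moreover have "integral {a..b} (\<lambda>t. (t - T) * QQ ls t * (QQ ls t - QQ ls T)) = JJ ls ls - T * II ls ls"
  proof -
    have "integral {a..b} (\<lambda>t. (t - T) * QQ ls t * (QQ ls t - QQ ls T))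
       = integral {a..b} (\<lambda>t. t * (QQ ls t * QQ ls t) - T * (QQ ls t * QQ ls t) - QQ ls T * (t * QQ ls t - T * QQ ls t))"
      by (rule integral_cong) (simp add: algebra_simps)
    also have "\<dots> = JJ ls ls - T * II ls ls - QQ ls T * (TT ls - T * integral {a..b} (QQ ls))"
      unfolding JJ_def II_def TT_def
      by (subst integral_diff integral_diff integral_diff, auto intro!: integrable_continuous_interval continuous_intros QQ_cont)+
    also have "TT ls - T * integral {a..b} (QQ ls) = 0" using QQ_int[OF ls] unfolding T_def by simp
    finally show ?thesis by simp
  qed
  ultimately have "JJ ls ls > T * II ls ls" by simp
  then have BT: "B > T" unfolding B_def using II_pos[OF ls ls] by (simp add: field_simps)
  have cT: "?c = ls * T + r / ls" using cc_form[OF ls] unfolding T_def .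
  have "?c > 2 * ls * T" using cB BT ls by (smt (verit) mult_strict_left_mono)
  then have "r / ls > ls * T" using cT by (simp add: mult.commute)
  then have neq: "ls * T - r / ls \<noteq> 0" by simp
  have "?c^2 = (ls * T - r / ls)^2 + 4 * (r * T)" unfolding cT using ls by (simp add: power2_eq_square field_simps)
  moreover have "(ls * T - r / ls)^2 > 0" using neq by simp
  ultimately have "?c^2 > 4 * (r * T)" by linarith
  moreover have rT: "r * T \<ge> 0" using r_pos Tb ab a_pos by simp
  ultimately have "sqrt (4 * (r * T)) < sqrt (?c^2)" by (intro real_sqrt_less_mono)
  then have "2 * sqrt (r * T) < ?c" using cpos by (simp add: real_sqrt_mult)
  then show "?c > 2 * sqrt (r * TT ls)" unfolding T_def .
  have "2 * ls * T > ls * (b + a)" using Tb ls by simp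
  then show "?c \<ge> ls * (b + a)" using cB BT ls by (smt (verit) mult_strict_left_mono)
qed

end



theorem proposition2p1:
  fixes tmin tmax \<alpha> r :: real
  assumes "0 < tmin" "tmin < tmax" "0 < \<alpha>" "0 < r"
  shows "\<exists>(c :: real \<Rightarrow> real) (Q :: real \<Rightarrow> real \<Rightarrow> real).
    (\<forall>lam>0. spectral_sol tmin tmax \<alpha> r lam (c lam) (Q lam) \<and>
       (\<forall>c' Q'. spectral_sol tmin tmax \<alpha> r lam c' Q' \<longrightarrow>
          c' = c lam \<and> (\<forall>t\<in>{tmin..tmax}. Q' t = Q lam t))) \<and>
    (\<forall>lam>0. strict_mono_on {tmin<..<tmax} (Q lam) \<and>
       (\<exists>t0\<in>{tmin..tmax}. - lam * c lam + lam\<^sup>2 * t0 + r = 0 \<and>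
          convex_on {tmin..t0} (Q lam) \<and> concave_on {t0..tmax} (Q lam))) \<and>
    (\<forall>lam>0. - lam * c lam + lam\<^sup>2 * integral {tmin..tmax} (\<lambda>t. t * Q lam t) + r = 0 \<and>
       integral {tmin..tmax} (\<lambda>t. t * Q lam t) > (tmax + tmin) / 2) \<and>
    (\<exists>lstar>0. (\<forall>lam>0. c lstar \<le> c lam) \<and> c lstar > 0 \<and>
       c lstar > 2 * sqrt (r * integral {tmin..tmax} (\<lambda>t. t * Q lstar t)) \<and>
       c lstar \<ge> lstar * (tmax + tmin))"
proof -
  interpret spec tmin tmax \<alpha> r by unfold_locales (use assms in auto)
  have P1: "\<forall>lam>0. spectral_sol tmin tmax \<alpha> r lam (cc lam) (QQ lam) \<and>
       (\<forall>c' Q'. spectral_sol tmin tmax \<alpha> r lam c' Q' \<longrightarrow>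
          c' = cc lam \<and> (\<forall>t\<in>{tmin..tmax}. Q' t = QQ lam t))"
  proof (intro allI impI)
    fix lam :: real assume l: "lam > 0"
    show "spectral_sol tmin tmax \<alpha> r lam (cc lam) (QQ lam) \<and> (\<forall>c' Q'. spectral_sol tmin tmax \<alpha> r lam c' Q' \<longrightarrow>
          c' = cc lam \<and> (\<forall>t\<in>{tmin..tmax}. Q' t = QQ lam t))"
    proof (intro conjI allI impI)
      show "spectral_sol tmin tmax \<alpha> r lam (cc lam) (QQ lam)" by (rule QQ_sol[OF l])
      fix c' Q' assume S: "spectral_sol tmin tmax \<alpha> r lam c' Q'"
      show "c' = cc lam" using uniq[OF l S QQ_sol[OF l]] by blast
      show "\<forall>t\<in>{tmin..tmax}. Q' t = QQ lam t" using uniq[OF l S QQ_sol[OF l]] by blast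
    qed
  qed
  have P2: "\<forall>lam>0. strict_mono_on {tmin<..<tmax} (QQ lam) \<and>
       (\<exists>t0\<in>{tmin..tmax}. - lam * cc lam + lam\<^sup>2 * t0 + r = 0 \<and>
          convex_on {tmin..t0} (QQ lam) \<and> concave_on {t0..tmax} (QQ lam))"
  proof (intro allI impI conjI)
    fix lam :: real assume l: "lam > 0"
    show "strict_mono_on {tmin<..<tmax} (QQ lam)"
    proof (rule strict_mono_onI)
      fix x y assume "x \<in> {tmin<..<tmax}" "y \<in> {tmin<..<tmax}" "x < y"
      then show "QQ lam x < QQ lam y" by (intro QQ_mono[OF l]) auto
    qed
    show "\<exists>t0\<in>{tmin..tmax}. - lam * cc lam + lam\<^sup>2 * t0 + r = 0 \<and>
          convex_on {tmin..t0} (QQ lam) \<and> concave_on {t0..tmax} (QQ lam)"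
    proof (intro bexI[of _ "TT lam"] conjI)
      show "TT lam \<in> {tmin..tmax}" using TT_gt[OF l] assms by auto
      show "- lam * cc lam + lam\<^sup>2 * TT lam + r = 0" by (rule TT_eq[OF l])
      show "convex_on {tmin..TT lam} (QQ lam)" by (rule QQ_convex[OF l])
      show "concave_on {TT lam..tmax} (QQ lam)" by (rule QQ_concave[OF l])
    qed
  qed
  have P3: "\<forall>lam>0. - lam * cc lam + lam\<^sup>2 * integral {tmin..tmax} (\<lambda>t. t * QQ lam t) + r = 0 \<and>
       integral {tmin..tmax} (\<lambda>t. t * QQ lam t) > (tmax + tmin) / 2"
  proof (intro allI impI conjI)
    fix lam :: real assume l: "lam > 0"
    show "- lam * cc lam + lam\<^sup>2 * integral {tmin..tmax} (\<lambda>t. t * QQ lam t) + r = 0"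
      using TT_eq[OF l] unfolding TT_def .
    show "integral {tmin..tmax} (\<lambda>t. t * QQ lam t) > (tmax + tmin) / 2"
      using TT_gt(1)[OF l] unfolding TT_def by (simp add: add.commute)
  qed
  obtain ls where ls: "ls > 0" "\<forall>l>0. cc ls \<le> cc l" using cc_min by blast
  have P4: "\<exists>lstar>0. (\<forall>lam>0. cc lstar \<le> cc lam) \<and> cc lstar > 0 \<and>
       cc lstar > 2 * sqrt (r * integral {tmin..tmax} (\<lambda>t. t * QQ lstar t)) \<and>
       cc lstar \<ge> lstar * (tmax + tmin)"
  proof (intro exI[of _ ls] conjI)
    show "ls > 0" "\<forall>lam>0. cc ls \<le> cc lam" by (rule ls(1), rule ls(2))
    show "cc ls > 0" by (rule part3(1)[OF ls])
    show "cc ls > 2 * sqrt (r * integral {tmin..tmax} (\<lambda>t. t * QQ ls t))"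
      using part3(2)[OF ls] unfolding TT_def .
    show "cc ls \<ge> ls * (tmax + tmin)" by (rule part3(3)[OF ls])
  qed
  show ?thesis by (intro exI[of _ cc] exI[of _ QQ] conjI P1 P2 P3 P4)
qed


end
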